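(* Assume the seeds are i.i.d. uniform on $[n]$. Let $M:\mathbb N\to\mathbb N$ satisfy $\lim_{n\to\infty}M(n)/\log n=\infty$. Let $(l_n)$, indexed by even $n\ge6$, be a sequence of integers such that eventually $l_n\in L_{opt}(n,M(n))$, where $$L_{opt}(n,m)=\operatorname*{arg\,max}_{l\in\{2,\dots,n/2-1\}}p_1(n,m,l).$$ Then, as $n\to\infty$ along even integers, $$\lim_{n\to\infty}\frac{l_n}{n}=\frac15\qquad\text{and}\qquad \limsup_{n\to\infty}\frac{1}{M(n)}\log\bigl[1-p_1(n,M(n),l_n)\bigr]\le\log\frac45 .$$
   Context: Candidates $[n]$, $m$ voters; voter $j$ has the clockwise oriented preference list $(s_j,s_j+1,\dots,n,1,\dots,s_j-1)$ with seed $s_j$; seeds are independent and uniform on $[n]$. In an election among a non-empty $S\subseteq[n]$ each voter votes for the first candidate of $S$ in its list; $\Xi_S(i)$ is the number of votes for $i$. Two-round election with partition $(A,B)$: the winner of $A$ is the $a\in A$ with $\Xi_A(a)>\Xi_A(a')$ for all other $a'\in A$ (if none, nobody wins); likewise for $B$; between first-round winners $a,b$, $a$ wins iff $\Xi_{\{a,b\}}(a)>\Xi_{\{a,b\}}(b)$ (ties: nobody wins). For even $n$ and $2\le l<n/2$, $A^{(1,n,l)}=\{1,\dots,l\}\cup\{l+2i:1\le i\le(n-2l)/2\}$, $B^{(1,n,l)}=[n]\setminus A^{(1,n,l)}$, and $p_1(n,m,l)$ is the probability that candidate $1$ wins the two-round election with partition $(A^{(1,n,l)},B^{(1,n,l)})$;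 $\log 0=-\infty$. *)

theory Defs
  imports Complex_Main "HOL-Library.FuncSet" "HOL-Library.Extended_Real" "HOL-Library.Liminf_Limsup"
begin

text \<open>Candidates are 1..n. A voter with seed s has the preference list
  (s, s+1, ..., n, 1, ..., s-1); the position of candidate c in it is cpos n s c.\<close>
definition cpos :: "nat \<Rightarrow> nat \<Rightarrow> nat \<Rightarrow> nat" where
  "cpos n s c = (c + n - s) mod n"

definition vote :: "nat \<Rightarrow> nat \<Rightarrow> nat set \<Rightarrow> nat" where
  "vote n s S = (THE c. c \<in> S \<and> (\<forall>c'\<in>S. cpos n s c \<le> cpos n s c'))"

definition Xi :: "nat \<Rightarrow> nat \<Rightarrow> (nat \<Rightarrow> nat) \<Rightarrow> nat set \<Rightarrow> nat \<Rightarrow> nat" where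
  "Xi n m seeds S i = card {j \<in> {0..<m}. vote n (seeds j) S = i}"

definition winner :: "nat \<Rightarrow> nat \<Rightarrow> (nat \<Rightarrow> nat) \<Rightarrow> nat set \<Rightarrow> nat option" where
  "winner n m seeds S =
     (if \<exists>a\<in>S. \<forall>a'\<in>S. a' \<noteq> a \<longrightarrow> Xi n m seeds S a > Xi n m seeds S a'
      then Some (THE a. a \<in> S \<and> (\<forall>a'\<in>S. a' \<noteq> a \<longrightarrow> Xi n m seeds S a > Xi n m seeds S a'))
      else None)"

definition wins_two_round ::
  "nat \<Rightarrow> nat \<Rightarrow> (nat \<Rightarrow> nat) \<Rightarrow> nat set \<Rightarrow> nat set \<Rightarrow> nat \<Rightarrow> bool" where
  "wins_two_round n m seeds A B x =
     (\<exists>a b. winner n m seeds A = Some a \<and> winner n m seeds B = Some b \<and>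
        ((x = a \<and> Xi n m seeds {a, b} a > Xi n m seeds {a, b} b) \<or>
         (x = b \<and> Xi n m seeds {a, b} b > Xi n m seeds {a, b} a)))"

definition Apart :: "nat \<Rightarrow> nat \<Rightarrow> nat set" where
  "Apart n l = {1..l} \<union> {l + 2 * i | i. 1 \<le> i \<and> i \<le> (n - 2 * l) div 2}"

definition Bpart :: "nat \<Rightarrow> nat \<Rightarrow> nat set" where
  "Bpart n l = {1..n} - Apart n l"

text \<open>Seeds i.i.d. uniform on [n]: uniform over all seed vectors (counting).\<close>
definition p1 :: "nat \<Rightarrow> nat \<Rightarrow> nat \<Rightarrow> real" where
  "p1 n m l = real (card {seeds \<in> {0..<m} \<rightarrow>\<^sub>E {1..n}.
                 wins_two_round n m seeds (Apart n l) (Bpart n l) 1}) / real n ^ m"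

definition L_opt :: "nat \<Rightarrow> nat \<Rightarrow> nat set" where
  "L_opt n m = {l \<in> {2..n div 2 - 1}. \<forall>l'\<in>{2..n div 2 - 1}. p1 n m l' \<le> p1 n m l}"

definition logE :: "real \<Rightarrow> ereal" where
  "logE x = (if x = 0 then -\<infinity> else ereal (ln x))"

end

theory Submission
  imports Defs
begin


lemma cpos_formula:
  assumes "1 \<le> s" "s \<le> n" "1 \<le> c" "c \<le> n"
  shows "cpos n s c = (if s \<le> c then c - s else c + n - s)"
proof (cases "s \<le> c")
  case True
  have eq: "c + n - s = (c - s) + n" using True by linarith
  have lt: "c - s < n" using True assms by linarith
  have "cpos n s c = ((c - s) + n) mod n" unfolding cpos_def eq ..
  also have "\<dots> = (c - s) mod n" by (rule mod_add_self2)
  also have "\<dots> = c - s" using lt by (rule mod_less)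
  finally show ?thesis using True by simp
next
  case False
  have lt: "c + n - s < n" using False assms by linarith
  have "cpos n s c = (c + n - s) mod n" unfolding cpos_def ..
  also have "\<dots> = c + n - s" using lt by (rule mod_less)
  finally show ?thesis using False by simp
qed

lemma cpos_inj:
  assumes "1 \<le> s" "s \<le> n" "1 \<le> c" "c \<le> n" "1 \<le> d" "d \<le> n"
    and "cpos n s c = cpos n s d"
  shows "c = d"
proof -
  have e: "(if s \<le> c then c - s else c + n - s) = (if s \<le> d then d - s else d + n - s)"
    using trans[OF trans[OF cpos_formula[OF assms(1-4), symmetric] assms(7)] cpos_formula[OF assms(1,2,5,6)]] .
  consider "s \<le> c" "s \<le> d" | "s \<le> c" "\<not> s \<le> d" | "\<not> s \<le> c" "s \<le> d" | "\<not> s \<le> c" "\<not> s \<le> d"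
    by blast
  then show ?thesis
  proof cases
    case 1 then have "c - s = d - s" using e by simp
    then show ?thesis using 1 by linarith
  next
    case 2 then have "c - s = d + n - s" using e by simp
    then show ?thesis using 2 assms by linarith
  next
    case 3 then have "c + n - s = d - s" using e by simp
    then show ?thesis using 3 assms by linarith
  next
    case 4 then have "c + n - s = d + n - s" using e by simp
    then show ?thesis using 4 assms by linarith
  qed
qed

lemma vote_char:
  assumes S: "S \<subseteq> {1..n}" and s: "s \<in> {1..n}" and c: "c \<in> S"
    and min: "\<forall>d\<in>S. cpos n s c \<le> cpos n s d"
  shows "vote n s S = c"
  unfolding vote_def
proof (rule the_equality)
  show "c \<in> S \<and> (\<forall>c'\<in>S. cpos n s c \<le> cpos n s c')" using c min by blast
next
  fix x assume x: "x \<in> S \<and> (\<forall>c'\<in>S. cpos n s x \<le> cpos n s c')"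
  have "cpos n s x \<le> cpos n s c" using x c by blast
  moreover have "cpos n s c \<le> cpos n s x" using x min by blast
  ultimately have e: "cpos n s x = cpos n s c" by (rule antisym)
  have "x \<in> {1..n}" "c \<in> {1..n}" using x c S by blast+
  then show "x = c" using cpos_inj[of s n x c, OF _ _ _ _ _ _ e] s by simp
qed

lemma vote_prop:
  assumes S: "S \<subseteq> {1..n}" and s: "s \<in> {1..n}" and ne: "S \<noteq> {}"
  shows "vote n s S \<in> S \<and> (\<forall>d\<in>S. cpos n s (vote n s S) \<le> cpos n s d)"
proof -
  have fin: "finite S" using S finite_subset by blast
  have f1: "finite (cpos n s ` S)" using fin by (rule finite_imageI)
  have f2: "cpos n s ` S \<noteq> {}" using ne by simp
  have "Min (cpos n s ` S) \<in> cpos n s ` S" using f1 f2 by (rule Min_in)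
  then obtain c where c1: "c \<in> S" and c2: "cpos n s c = Min (cpos n s ` S)" by (rule imageE) simp
  have c3: "\<forall>d\<in>S. cpos n s c \<le> cpos n s d"
  proof
    fix d assume "d \<in> S"
    then have "cpos n s d \<in> cpos n s ` S" by (rule imageI)
    then have "Min (cpos n s ` S) \<le> cpos n s d" using f1 by (intro Min_le)
    then show "cpos n s c \<le> cpos n s d" using c2 by simp
  qed
  note c = c1 c3
  have "vote n s S = c" using vote_char[OF S s c(1) c(2)] .
  then show ?thesis using c by simp
qed

lemma vote_between:
  assumes S: "S \<subseteq> {1..n}" and s: "s \<in> {1..n}" and c: "c \<in> S" and d: "d \<in> S"
    and dc: "d < c" and v: "vote n s S = c"
  shows "d < s \<and> s \<le> c"
proof -
  have ne: "S \<noteq> {}" using c by blast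
  have "\<forall>d\<in>S. cpos n s (vote n s S) \<le> cpos n s d" using vote_prop[OF S s ne] by (rule conjunct2)
  then have "cpos n s (vote n s S) \<le> cpos n s d" using d by (rule bspec)
  then have "cpos n s c \<le> cpos n s d" using v by simp
  moreover have "1 \<le> d" "c \<le> n" "1 \<le> c" "d \<le> n" using S c d by auto
  moreover have "1 \<le> s" "s \<le> n" using s by auto
  ultimately have le: "cpos n s c \<le> cpos n s d" and b: "1 \<le> d" "c \<le> n" "1 \<le> c" "d \<le> n" "1 \<le> s" "s \<le> n"
    by auto
  have fc: "cpos n s c = (if s \<le> c then c - s else c + n - s)" using cpos_formula b by blast
  have fd: "cpos n s d = (if s \<le> d then d - s else d + n - s)" using cpos_formula b by blast
  show ?thesis
  proof (rule ccontr)
    assume "\<not> (d < s \<and> s \<le> c)"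
    then consider "s \<le> d" | "c < s" by linarith
    then show False
    proof cases
      case 1
      then have "cpos n s c = c - s" "cpos n s d = d - s" using fc fd dc by simp_all
      then show False using le 1 dc by linarith
    next
      case 2
      then have "cpos n s c = c + n - s" "cpos n s d = d + n - s" using fc fd dc by simp_all
      then show False using le 2 dc b by linarith
    qed
  qed
qed

lemma vote_not:
  assumes S: "S \<subseteq> {1..n}" and s: "s \<in> {1..n}" and c: "c \<in> S" and d: "d \<in> S"
    and lt: "cpos n s d < cpos n s c"
  shows "vote n s S \<noteq> c"
proof
  assume v: "vote n s S = c"
  have ne: "S \<noteq> {}" using c by blast
  have "\<forall>d\<in>S. cpos n s (vote n s S) \<le> cpos n s d" using vote_prop[OF S s ne] by (rule conjunct2)
  then have "cpos n s (vote n s S) \<le> cpos n s d" using d by (rule bspec)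
  then have "cpos n s c \<le> cpos n s d" using v by simp
  then show False using lt by linarith
qed

lemma cpos_lo: "1 \<le> s \<Longrightarrow> s \<le> c \<Longrightarrow> c \<le> n \<Longrightarrow> cpos n s c = c - s"
  using cpos_formula[of s n c] by simp

lemma cpos_hi: "1 \<le> c \<Longrightarrow> c < s \<Longrightarrow> s \<le> n \<Longrightarrow> cpos n s c = c + n - s"
  using cpos_formula[of s n c] by simp


lemma A_mem:
  assumes ev: "even n" and ln: "2*l \<le> n"
  shows "c \<in> Apart n l \<longleftrightarrow> (1 \<le> c \<and> c \<le> l) \<or> (l+2 \<le> c \<and> c \<le> n - l \<and> even (c - l))"
proof
  assume "c \<in> Apart n l"
  then consider "1 \<le> c \<and> c \<le> l" | i where "c = l + 2*i" "1 \<le> i" "i \<le> (n - 2*l) div 2"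
    unfolding Apart_def by auto
  then show "(1 \<le> c \<and> c \<le> l) \<or> (l+2 \<le> c \<and> c \<le> n - l \<and> even (c - l))"
  proof cases
    case 1 then show ?thesis by blast
  next
    case 2
    have "2 * ((n - 2*l) div 2) = n - 2*l" using ev by simp
    then have "c \<le> n - l" using 2 ln by linarith
    moreover have "c - l = 2*i" using 2 by simp
    ultimately show ?thesis using 2 by simp
  qed
next
  assume h: "(1 \<le> c \<and> c \<le> l) \<or> (l+2 \<le> c \<and> c \<le> n - l \<and> even (c - l))"
  show "c \<in> Apart n l"
  proof (cases "1 \<le> c \<and> c \<le> l")
    case True then show ?thesis unfolding Apart_def by auto
  next
    case False
    then have h2: "l+2 \<le> c" "c \<le> n - l" "even (c - l)" using h by auto
    define i where "i = (c - l) div 2"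
    have ci: "c = l + 2*i" using h2 unfolding i_def by simp
    have "1 \<le> i" using h2 ci by linarith
    moreover have "i \<le> (n - 2*l) div 2" using h2 ci by linarith
    ultimately show ?thesis unfolding Apart_def using ci by blast
  qed
qed

locale elec =
  fixes n l :: nat
  assumes ev: "even n" and l2: "2 \<le> l" and ln: "2*l + 2 \<le> n"
begin

abbreviation "A \<equiv> Apart n l"
abbreviation "B \<equiv> Bpart n l"

lemma Amem: "c \<in> A \<longleftrightarrow> (1 \<le> c \<and> c \<le> l) \<or> (l+2 \<le> c \<and> c \<le> n - l \<and> even (c - l))"
  using A_mem[OF ev, of l c] ln by simp

lemma Bmem: "c \<in> B \<longleftrightarrow> 1 \<le> c \<and> c \<le> n \<and> \<not> ((1 \<le> c \<and> c \<le> l) \<or> (l+2 \<le> c \<and> c \<le> n - l \<and> even (c - l)))"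
  unfolding Bpart_def using Amem by auto

lemma A_range: assumes "e \<in> A" shows "1 \<le> e" "e \<le> n - l"
proof -
  have h: "(1 \<le> e \<and> e \<le> l) \<or> (l+2 \<le> e \<and> e \<le> n - l \<and> even (e - l))"
    using assms Amem by blast
  have "1 \<le> e \<and> e \<le> n - l"
  proof (rule disjE[OF h])
    assume "1 \<le> e \<and> e \<le> l" then show ?thesis using ln by linarith
  next
    assume "l+2 \<le> e \<and> e \<le> n - l \<and> even (e - l)" then show ?thesis by linarith
  qed
  then show "1 \<le> e" "e \<le> n - l" by auto
qed

lemma A_sub: "A \<subseteq> {1..n}"
  using Amem ln by (auto simp del: One_nat_def)

lemma B_sub: "B \<subseteq> {1..n}"
  unfolding Bpart_def by auto

lemma one_A: "1 \<in> A" using Amem l2 by simp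
lemma two_A: "2 \<in> A" using Amem l2 by simp
lemma l1_B: "l+1 \<in> B" using Bmem ln by simp
lemma one_notB: "1 \<notin> B" using Bmem l2 by simp

lemma voteA_1:
  assumes s: "s \<in> {1..n}" and h: "s = 1 \<or> n - l < s"
  shows "vote n s A = 1"
proof (rule vote_char[OF A_sub s one_A], rule ballI)
  fix e assume e: "e \<in> A"
  then have e1: "1 \<le> e" "e \<le> n - l" by (rule A_range)+
  have s1: "1 \<le> s" "s \<le> n" using s by auto
  show "cpos n s 1 \<le> cpos n s e"
  proof (cases "s = 1")
    case True
    then have "cpos n s 1 = 0" using cpos_lo[of s 1 n] s1 by simp
    then show ?thesis by simp
  next
    case False
    then have ls: "n - l < s" using h by simp
    have "cpos n s 1 = 1 + n - s" using cpos_hi[of 1 s n] False s1 by simp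
    moreover have "cpos n s e = e + n - s" using cpos_hi[of e s n] e1 ls s1 by linarith
    ultimately show ?thesis using e1 by linarith
  qed
qed

lemma voteA_1_conv:
  assumes s: "s \<in> {1..n}" and v: "vote n s A = 1"
  shows "s = 1 \<or> n - l < s"
proof (rule ccontr)
  assume "\<not> (s = 1 \<or> n - l < s)"
  then have s2: "2 \<le> s" "s \<le> n - l" using s by auto
  obtain d where d: "d \<in> A" "s \<le> d" "d \<le> n - l"
  proof (cases "s \<in> A")
    case True then show ?thesis using that s2 by blast
  next
    case False
    then have nA: "\<not> ((1 \<le> s \<and> s \<le> l) \<or> (l+2 \<le> s \<and> s \<le> n - l \<and> even (s - l)))"
      using Amem by blast
    have "(1 \<le> s+1 \<and> s+1 \<le> l) \<or> (l+2 \<le> s+1 \<and> s+1 \<le> n - l \<and> even (s+1 - l))"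
      using nA s2 ev ln by presburger
    then have "s + 1 \<in> A" "s + 1 \<le> n - l" using Amem nA s2 by (blast, presburger)
    then show ?thesis using that by simp
  qed
  have "cpos n s d = d - s" using cpos_lo[of s d n] d s2 ln by linarith
  moreover have "cpos n s 1 = 1 + n - s" using cpos_hi[of 1 s n] s2 ln by linarith
  ultimately have "cpos n s d < cpos n s 1" using d s2 by linarith
  then show False using vote_not[OF A_sub s one_A d(1)] v by simp
qed

lemma B_ge: assumes "e \<in> B" shows "l + 1 \<le> e" "e \<le> n"
proof -
  have h: "1 \<le> e \<and> e \<le> n \<and> \<not> ((1 \<le> e \<and> e \<le> l) \<or> (l+2 \<le> e \<and> e \<le> n - l \<and> even (e - l)))"
    using assms Bmem by blast
  then show "l + 1 \<le> e" "e \<le> n" by linarith+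
qed

lemma B_intro: assumes "1 \<le> d" "d \<le> n" "l < d" "d \<le> n - l \<Longrightarrow> odd (d - l)" shows "d \<in> B"
proof -
  have "\<not> ((1 \<le> d \<and> d \<le> l) \<or> (l+2 \<le> d \<and> d \<le> n - l \<and> even (d - l)))"
    using assms by auto
  then show ?thesis using Bmem assms by blast
qed

lemma A_intro1: "1 \<le> d \<Longrightarrow> d \<le> l \<Longrightarrow> d \<in> A" using Amem by blast
lemma A_intro2: "l+2 \<le> d \<Longrightarrow> d \<le> n - l \<Longrightarrow> even (d - l) \<Longrightarrow> d \<in> A" using Amem by blast

lemma B_cases: assumes "c \<in> B" shows "l < c" "c \<le> n" "c \<le> n - l \<Longrightarrow> odd (c - l)"
proof -
  have h: "1 \<le> c \<and> c \<le> n \<and> \<not> ((1 \<le> c \<and> c \<le> l) \<or> (l+2 \<le> c \<and> c \<le> n - l \<and> even (c - l)))"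
    using assms Bmem by blast
  then show "l < c" "c \<le> n" by linarith+
  show "odd (c - l)" if "c \<le> n - l"
  proof (cases "c = l + 1")
    case True then show ?thesis by simp
  next
    case False
    then have "l + 2 \<le> c" using h by linarith
    then show ?thesis using h that by blast
  qed
qed

lemma compet_A:
  assumes c: "c \<in> A" and c1: "c \<noteq> 1"
  shows "\<exists>d\<in>A. 1 \<le> d \<and> d < c \<and> c \<le> d + 2"
proof -
  have h: "(1 \<le> c \<and> c \<le> l) \<or> (l+2 \<le> c \<and> c \<le> n - l \<and> even (c - l))"
    using c Amem by blast
  then show ?thesis
  proof (elim disjE conjE)
    assume "1 \<le> c" "c \<le> l"
    then have "c - 1 \<in> A" "1 \<le> c - 1" using c1 A_intro1[of "c - 1"] by auto
    then show ?thesis by (intro bexI[of _ "c - 1"]) auto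
  next
    assume h2: "l+2 \<le> c" "c \<le> n - l" "even (c - l)"
    show ?thesis
    proof (cases "c = l + 2")
      case True
      then have "l \<in> A" using A_intro1[of l] l2 by auto
      then show ?thesis using True l2 by (intro bexI[of _ l]) auto
    next
      case False
      then have c4: "l + 4 \<le> c" using h2 by presburger
      have "even (c - 2 - l)" using h2 c4 by presburger
      then have "c - 2 \<in> A" using A_intro2[of "c - 2"] c4 h2 by auto
      then show ?thesis using c4 by (intro bexI[of _ "c - 2"]) auto
    qed
  qed
qed

lemma compet_B:
  assumes c: "c \<in> B" and c1: "c \<noteq> l + 1"
  shows "\<exists>d\<in>B. l + 1 \<le> d \<and> d < c \<and> c \<le> d + 2"
proof -
  note cb = B_cases[OF c]
  have cl: "l + 2 \<le> c" using cb(1) c1 by linarith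
  show ?thesis
  proof (cases "c \<le> n - l")
    case True
    then have o: "odd (c - l)" using cb(3) by blast
    have "c \<noteq> l + 2" using o by auto
    then have c3: "l + 3 \<le> c" using cl by linarith
    have "odd (c - 2 - l)" using o c3 by presburger
    then have "c - 2 \<in> B" using c3 cb(2) by (intro B_intro) auto
    then show ?thesis using c3 by (intro bexI[of _ "c - 2"]) auto
  next
    case False
    show ?thesis
    proof (cases "c - 1 = n - l")
      case True
      have en: "even (n - l - l)" using ev ln by presburger
      have eq: "c - 2 - l = (n - l - l) - 1" using True ln by linarith
      have "0 < n - l - l" using ln by linarith
      then have od: "odd (c - 2 - l)" unfolding eq using en by presburger
      have "l + 1 \<le> c - 2" using True ln by linarith
      then have "c - 2 \<in> B" using od cb(2) by (intro B_intro) auto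
      then show ?thesis using True ln by (intro bexI[of _ "c - 2"]) auto
    next
      case False2: False
      have "n - l < c - 1" using False False2 by linarith
      then have "c - 1 \<in> B" using cb(2) ln by (intro B_intro) auto
      then show ?thesis using False ln by (intro bexI[of _ "c - 1"]) auto
    qed
  qed
qed

lemma voteB_l1:
  assumes s: "s \<in> {1..l+1}"
  shows "vote n s B = l + 1"
proof -
  have sn: "s \<in> {1..n}" using s ln by auto
  show ?thesis
  proof (rule vote_char[OF B_sub sn l1_B], rule ballI)
    fix e assume e: "e \<in> B"
    have e1: "l + 1 \<le> e" "e \<le> n" using B_ge[OF e] by auto
    have "cpos n s (l+1) = l + 1 - s" using cpos_lo[of s "l+1" n] s ln by simp
    moreover have "cpos n s e = e - s" using cpos_lo[of s e n] s e1 by simp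
    ultimately show "cpos n s (l+1) \<le> cpos n s e" using e1 by linarith
  qed
qed

end

lemma seeds_in:
  assumes S: "S \<subseteq> {1..n}" and c: "c \<in> S" and d: "d \<in> S" and dc: "d < c"
  shows "\<forall>s\<in>{1..n}. vote n s S = c \<longrightarrow> s \<in> {d+1..c}"
proof (intro ballI impI)
  fix s assume s: "s \<in> {1..n}" and v: "vote n s S = c"
  have "d < s \<and> s \<le> c" by (rule vote_between[OF S s c d dc v])
  then show "s \<in> {d+1..c}" by simp
qed

lemma final_b:
  assumes b: "1 < b" "b \<le> n" and s: "s \<in> {2..b}"
  shows "vote n s {1, b} = b"
proof -
  have S: "{1, b} \<subseteq> {1..n}" using b by auto
  have sn: "s \<in> {1..n}" using s b by auto
  show ?thesis
  proof (rule vote_char[OF S sn], simp, rule ballI)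
    fix e assume e: "e \<in> {1, b}"
    have "cpos n s b = b - s" using cpos_lo[of s b n] s b by simp
    moreover have "cpos n s 1 = 1 + n - s" using cpos_hi[of 1 s n] s b by simp
    ultimately show "cpos n s b \<le> cpos n s e" using e s b by auto
  qed
qed

lemma final_1:
  assumes b: "1 < b" "b \<le> n" and s: "s \<in> {1..n}" and h: "s = 1 \<or> b < s"
  shows "vote n s {1, b} = 1"
proof -
  have S: "{1, b} \<subseteq> {1..n}" using b by auto
  show ?thesis
  proof (rule vote_char[OF S s], simp, rule ballI)
    fix e assume e: "e \<in> {1, b}"
    show "cpos n s 1 \<le> cpos n s e"
    proof (cases "s = 1")
      case True
      then show ?thesis using cpos_lo[of s 1 n] s by simp
    next
      case False
      then have bs: "b < s" using h by simp
      have "cpos n s b = b + n - s" using cpos_hi[of b s n] s b bs by simp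
      moreover have "cpos n s 1 = 1 + n - s" using cpos_hi[of 1 s n] s False by simp
      ultimately show ?thesis using e s b bs by auto
    qed
  qed
qed


definition cnt :: "nat \<Rightarrow> (nat \<Rightarrow> nat) \<Rightarrow> nat set \<Rightarrow> nat" where
  "cnt m f U = card {j \<in> {0..<m}. f j \<in> U}"

definition Ev :: "nat \<Rightarrow> nat \<Rightarrow> nat set \<Rightarrow> nat set \<Rightarrow> (nat \<Rightarrow> nat) set" where
  "Ev n m T U = {f \<in> {0..<m} \<rightarrow>\<^sub>E {1..n}. cnt m f U \<le> cnt m f T}"

lemma prod_w:
  fixes lam :: real
  assumes TU: "T \<inter> U = {}"
  shows "(\<Prod>j\<in>{0..<m}. (if f j \<in> T then lam else if f j \<in> U then 1 / lam else 1))
         = lam ^ cnt m f T * (1 / lam) ^ cnt m f U"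
proof -
  have fin: "finite {0..<m}" by simp
  have "(\<Prod>j\<in>{0..<m}. (if f j \<in> T then lam else if f j \<in> U then 1 / lam else 1))
     = (\<Prod>j\<in>{0..<m} \<inter> {j. f j \<in> T}. lam) * (\<Prod>j\<in>{0..<m} \<inter> - {j. f j \<in> T}. (if f j \<in> U then 1 / lam else 1))"
    by (rule prod.If_cases[OF fin])
  also have "(\<Prod>j\<in>{0..<m} \<inter> - {j. f j \<in> T}. (if f j \<in> U then 1 / lam else 1))
     = (\<Prod>j\<in>{0..<m} \<inter> - {j. f j \<in> T} \<inter> {j. f j \<in> U}. 1 / lam) * (\<Prod>j\<in>{0..<m} \<inter> - {j. f j \<in> T} \<inter> - {j. f j \<in> U}. 1)"
    by (rule prod.If_cases) simp
  also have "{0..<m} \<inter> {j. f j \<in> T} = {j \<in> {0..<m}. f j \<in> T}" by blast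
  also have "{0..<m} \<inter> - {j. f j \<in> T} \<inter> {j. f j \<in> U} = {j \<in> {0..<m}. f j \<in> U}" using TU by blast
  finally show ?thesis unfolding cnt_def by simp
qed

lemma sum_w:
  fixes lam :: real
  assumes TU: "T \<inter> U = {}" and T: "T \<subseteq> {1..n}" and U: "U \<subseteq> {1..n}"
  shows "(\<Sum>s\<in>{1..n}. (if s \<in> T then lam else if s \<in> U then 1 / lam else 1))
         = real n - real (card T) - real (card U) + real (card T) * lam + real (card U) / lam"
proof -
  have fin: "finite {1..n}" by simp
  have "(\<Sum>s\<in>{1..n}. (if s \<in> T then lam else if s \<in> U then 1 / lam else 1))
     = (\<Sum>s\<in>{1..n} \<inter> {s. s \<in> T}. lam) + (\<Sum>s\<in>{1..n} \<inter> - {s. s \<in> T}. (if s \<in> U then 1 / lam else 1))"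
    by (rule sum.If_cases[OF fin])
  also have "(\<Sum>s\<in>{1..n} \<inter> - {s. s \<in> T}. (if s \<in> U then 1 / lam else 1))
     = (\<Sum>s\<in>{1..n} \<inter> - {s. s \<in> T} \<inter> {s. s \<in> U}. 1 / lam) + (\<Sum>s\<in>{1..n} \<inter> - {s. s \<in> T} \<inter> - {s. s \<in> U}. 1)"
    by (rule sum.If_cases) simp
  also have e1: "{1..n} \<inter> {s. s \<in> T} = T" using T by blast
  also have e2: "{1..n} \<inter> - {s. s \<in> T} \<inter> {s. s \<in> U} = U" using TU U by blast
  also have e3: "{1..n} \<inter> - {s. s \<in> T} \<inter> - {s. s \<in> U} = {1..n} - (T \<union> U)" by blast
  finally have eq: "(\<Sum>s\<in>{1..n}. (if s \<in> T then lam else if s \<in> U then 1 / lam else 1))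
     = real (card T) * lam + (real (card U) * (1 / lam) + real (card ({1..n} - (T \<union> U))))" by simp
  have fT: "finite T" "finite U" using T U finite_subset by blast+
  have "card ({1..n} - (T \<union> U)) = n - card (T \<union> U)"
    using T U by (subst card_Diff_subset) (auto intro: finite_subset)
  moreover have "card (T \<union> U) = card T + card U" using TU fT by (simp add: card_Un_disjoint)
  moreover have "card (T \<union> U) \<le> n" using T U by (metis card_atLeastAtMost card_mono finite_atLeastAtMost le_sup_iff diff_Suc_1)
  ultimately have "real (card ({1..n} - (T \<union> U))) = real n - real (card T) - real (card U)" by simp
  then show ?thesis unfolding eq by simp
qed

lemma chernoff:
  fixes lam :: real
  assumes TU: "T \<inter> U = {}" and T: "T \<subseteq> {1..n}" and U: "U \<subseteq> {1..n}" and lam: "1 \<le> lam"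
  shows "real (card (Ev n m T U)) \<le> (real n - real (card T) - real (card U) + real (card T) * lam + real (card U) / lam) ^ m"
proof -
  define w where "w s = (if s \<in> T then lam else if s \<in> U then 1 / lam else 1)" for s
  define g where "g f = (\<Prod>j\<in>{0..<m}. w (f j))" for f
  have wpos: "w s \<ge> 0" for s using lam unfolding w_def by auto
  have gpos: "g f \<ge> 0" for f unfolding g_def using wpos by (simp add: prod_nonneg)
  have fP: "finite ({0..<m} \<rightarrow>\<^sub>E {1..n})" by (simp add: finite_PiE)
  have sub: "Ev n m T U \<subseteq> {0..<m} \<rightarrow>\<^sub>E {1..n}" unfolding Ev_def by blast
  have g1: "1 \<le> g f" if f: "f \<in> Ev n m T U" for f
  proof -
    have le: "cnt m f U \<le> cnt m f T" using f unfolding Ev_def by blast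
    have "g f = lam ^ cnt m f T * (1 / lam) ^ cnt m f U" unfolding g_def w_def by (rule prod_w[OF TU])
    also have "\<dots> = lam ^ (cnt m f T - cnt m f U) * (lam ^ cnt m f U * (1 / lam) ^ cnt m f U)"
      using le by (simp add: power_add[symmetric])
    also have "lam ^ cnt m f U * (1 / lam) ^ cnt m f U = 1" using lam by (simp add: power_one_over)
    finally have "g f = lam ^ (cnt m f T - cnt m f U)" by simp
    then show ?thesis using lam by (simp add: one_le_power)
  qed
  have "real (card (Ev n m T U)) = (\<Sum>f\<in>Ev n m T U. 1)" by simp
  also have "\<dots> \<le> (\<Sum>f\<in>Ev n m T U. g f)" by (rule sum_mono) (rule g1)
  also have "\<dots> \<le> (\<Sum>f\<in>{0..<m} \<rightarrow>\<^sub>E {1..n}. g f)"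
    by (rule sum_mono2[OF fP sub]) (rule gpos)
  also have "\<dots> = (\<Prod>j\<in>{0..<m}. \<Sum>s\<in>{1..n}. w s)"
    unfolding g_def by (rule prod_sum_PiE[symmetric]) auto
  also have "\<dots> = (\<Sum>s\<in>{1..n}. w s) ^ m" by simp
  also have "(\<Sum>s\<in>{1..n}. w s) = real n - real (card T) - real (card U) + real (card T) * lam + real (card U) / lam"
    unfolding w_def by (rule sum_w[OF TU T U])
  finally show ?thesis .
qed

lemma count_all_in:
  assumes X: "X \<subseteq> {1..n}"
  shows "card {f \<in> {0..<m} \<rightarrow>\<^sub>E {1..n}. \<forall>j\<in>{0..<m}. f j \<in> X} = card X ^ m"
proof -
  have "{f \<in> {0..<m} \<rightarrow>\<^sub>E {1..n}. \<forall>j\<in>{0..<m}. f j \<in> X} = {0..<m} \<rightarrow>\<^sub>E X"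
    using X by (auto simp: PiE_def Pi_def)
  then show ?thesis by (simp add: card_PiE)
qed

lemma binom_lower:
  assumes TU: "T \<inter> U = {}" and TU2: "T \<union> U = {1..n}" and km: "k \<le> m" and mk: "m - k \<le> k"
  shows "(m choose k) * card T ^ k * card U ^ (m - k) \<le> card (Ev n m T U)"
proof -
  define Fam where "Fam = {K \<in> Pow {0..<m}. card K = k}"
  define Q where "Q K = PiE {0..<m} (\<lambda>j. if j \<in> K then T else U)" for K
  have finFam: "finite Fam" unfolding Fam_def by simp
  have fTU: "finite T" "finite U" using TU2 by (metis finite_Un finite_atLeastAtMost)+
  have finQ: "finite (Q K)" for K unfolding Q_def using fTU
    by (intro finite_PiE) auto
  have Kset: "{j \<in> {0..<m}. f j \<in> T} = K" if K: "K \<subseteq> {0..<m}" and f: "f \<in> Q K" for K f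
  proof -
    have "f j \<in> (if j \<in> K then T else U)" if "j \<in> {0..<m}" for j
      using f that unfolding Q_def by (auto simp: PiE_def Pi_def)
    note h = this
    show ?thesis
    proof (intro equalityI subsetI)
      fix j assume j: "j \<in> {j \<in> {0..<m}. f j \<in> T}"
      show "j \<in> K"
      proof (rule ccontr)
        assume "j \<notin> K"
        then have "f j \<in> U" using h[of j] j by simp
        then show False using j TU by blast
      qed
    next
      fix j assume j: "j \<in> K"
      then have "j \<in> {0..<m}" using K by blast
      then show "j \<in> {j \<in> {0..<m}. f j \<in> T}" using h[of j] j by simp
    qed
  qed
  have Uset: "{j \<in> {0..<m}. f j \<in> U} = {0..<m} - K" if K: "K \<subseteq> {0..<m}" and f: "f \<in> Q K" for K f
  proof -
    have "f j \<in> (if j \<in> K then T else U)" if "j \<in> {0..<m}" for j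
      using f that unfolding Q_def by (auto simp: PiE_def Pi_def)
    note h = this
    show ?thesis
    proof (intro equalityI subsetI)
      fix j assume j: "j \<in> {j \<in> {0..<m}. f j \<in> U}"
      show "j \<in> {0..<m} - K"
      proof (rule ccontr)
        assume "j \<notin> {0..<m} - K"
        then have "f j \<in> T" using h[of j] j by auto
        then show False using j TU by blast
      qed
    next
      fix j assume j: "j \<in> {0..<m} - K"
      then show "j \<in> {j \<in> {0..<m}. f j \<in> U}" using h[of j] j by simp
    qed
  qed
  have subEv: "\<Union> (Q ` Fam) \<subseteq> Ev n m T U"
  proof
    fix f assume "f \<in> \<Union> (Q ` Fam)"
    then obtain K where K: "K \<in> Fam" and f: "f \<in> Q K" by blast
    have Ks: "K \<subseteq> {0..<m}" and Kc: "card K = k" using K unfolding Fam_def by auto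
    have TUs: "T \<subseteq> {1..n}" "U \<subseteq> {1..n}" using TU2 by blast+
    have "(if j \<in> K then T else U) \<subseteq> {1..n}" for j using TUs by simp
    then have "Q K \<subseteq> {0..<m} \<rightarrow>\<^sub>E {1..n}" unfolding Q_def by (intro PiE_mono) auto
    then have "f \<in> {0..<m} \<rightarrow>\<^sub>E {1..n}" using f by blast
    moreover have "cnt m f T = k" unfolding cnt_def Kset[OF Ks f] Kc ..
    moreover have "finite K" using Ks finite_subset by blast
    then have "cnt m f U = m - k" unfolding cnt_def Uset[OF Ks f] using Ks Kc by (simp add: card_Diff_subset)
    ultimately show "f \<in> Ev n m T U" unfolding Ev_def using mk by simp
  qed
  have disj: "Q K \<inter> Q K' = {}" if "K \<in> Fam" "K' \<in> Fam" "K \<noteq> K'" for K K'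
  proof -
    have "K \<subseteq> {0..<m}" "K' \<subseteq> {0..<m}" using that unfolding Fam_def by auto
    then show ?thesis using Kset that(3) by blast
  qed
  have cardQ: "card (Q K) = card T ^ k * card U ^ (m - k)" if K: "K \<in> Fam" for K
  proof -
    have Ks: "K \<subseteq> {0..<m}" and Kc: "card K = k" using K unfolding Fam_def by auto
    have "card (Q K) = (\<Prod>j\<in>{0..<m}. card (if j \<in> K then T else U))"
      unfolding Q_def by (simp add: card_PiE)
    also have "\<dots> = (\<Prod>j\<in>{0..<m}. if j \<in> K then card T else card U)"
      by (rule prod.cong) auto
    also have "\<dots> = (\<Prod>j\<in>{0..<m} \<inter> {j. j \<in> K}. card T) * (\<Prod>j\<in>{0..<m} \<inter> - {j. j \<in> K}. card U)"
      by (rule prod.If_cases) simp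
    also have "{0..<m} \<inter> {j. j \<in> K} = K" using Ks by blast
    also have "{0..<m} \<inter> - {j. j \<in> K} = {0..<m} - K" by blast
    moreover have "finite K" using Ks finite_subset by blast
    ultimately show ?thesis using Ks Kc by (simp add: card_Diff_subset)
  qed
  have "card (\<Union> (Q ` Fam)) = (\<Sum>K\<in>Fam. card (Q K))"
    by (rule card_UN_disjoint[OF finFam]) (use finQ disj in auto)
  also have "\<dots> = (\<Sum>K\<in>Fam. card T ^ k * card U ^ (m - k))" by (rule sum.cong) (auto simp: cardQ)
  also have "\<dots> = card Fam * (card T ^ k * card U ^ (m - k))" by simp
  also have "card Fam = m choose k" unfolding Fam_def binomial_def ..
  finally have eq: "card (\<Union> (Q ` Fam)) = (m choose k) * card T ^ k * card U ^ (m - k)" by simp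
  have finEv: "finite (Ev n m T U)" unfolding Ev_def by (simp add: finite_PiE)
  show ?thesis using card_mono[OF finEv subEv] eq by simp
qed


lemma winner_intro:
  assumes c: "c \<in> S" and h: "\<forall>a'\<in>S. a' \<noteq> c \<longrightarrow> Xi n m f S a' < Xi n m f S c"
  shows "winner n m f S = Some c"
proof -
  have ex: "\<exists>a\<in>S. \<forall>a'\<in>S. a' \<noteq> a \<longrightarrow> Xi n m f S a > Xi n m f S a'" using c h by blast
  have "(THE a. a \<in> S \<and> (\<forall>a'\<in>S. a' \<noteq> a \<longrightarrow> Xi n m f S a > Xi n m f S a')) = c"
  proof (rule the_equality)
    show "c \<in> S \<and> (\<forall>a'\<in>S. a' \<noteq> c \<longrightarrow> Xi n m f S c > Xi n m f S a')" using c h by blast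
  next
    fix a assume a: "a \<in> S \<and> (\<forall>a'\<in>S. a' \<noteq> a \<longrightarrow> Xi n m f S a > Xi n m f S a')"
    show "a = c"
    proof (rule ccontr)
      assume ne: "a \<noteq> c"
      then have ne2: "c \<noteq> a" by simp
      have "Xi n m f S a > Xi n m f S c" using a c ne2 by blast
      moreover have "Xi n m f S c > Xi n m f S a" using h a ne by blast
      ultimately show False by simp
    qed
  qed
  then show ?thesis unfolding winner_def using ex by simp
qed

lemma winner_Some:
  assumes "winner n m f S = Some a"
  shows "a \<in> S \<and> (\<forall>a'\<in>S. a' \<noteq> a \<longrightarrow> Xi n m f S a' < Xi n m f S a)"
proof -
  have ex: "\<exists>a\<in>S. \<forall>a'\<in>S. a' \<noteq> a \<longrightarrow> Xi n m f S a > Xi n m f S a'"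
    using assms unfolding winner_def by (auto split: if_splits)
  then obtain c where c: "c \<in> S" "\<forall>a'\<in>S. a' \<noteq> c \<longrightarrow> Xi n m f S c > Xi n m f S a'" by blast
  have "winner n m f S = Some c" by (rule winner_intro) (use c in auto)
  then have "a = c" using assms by simp
  then show ?thesis using c by simp
qed

lemma Xi_ge:
  assumes "\<forall>s\<in>U. vote n s S = c"
  shows "cnt m f U \<le> Xi n m f S c"
  unfolding cnt_def Xi_def using assms by (intro card_mono) auto

lemma Xi_le:
  assumes f: "f \<in> {0..<m} \<rightarrow>\<^sub>E {1..n}" and h: "\<forall>s\<in>{1..n}. vote n s S = c \<longrightarrow> s \<in> T"
  shows "Xi n m f S c \<le> cnt m f T"
  unfolding cnt_def Xi_def
proof (intro card_mono)
  show "{j \<in> {0..<m}. vote n (f j) S = c} \<subseteq> {j \<in> {0..<m}. f j \<in> T}"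
  proof
    fix j assume j: "j \<in> {j \<in> {0..<m}. vote n (f j) S = c}"
    then have "f j \<in> {1..n}" using f by (auto simp: PiE_def Pi_def)
    then show "j \<in> {j \<in> {0..<m}. f j \<in> T}" using h j by blast
  qed
qed simp

lemma chern_gen:
  assumes TU: "T \<inter> U = {}" and T: "T \<subseteq> {1..n}" and U: "U \<subseteq> {1..n}"
    and t0: "card T \<le> t0" "1 \<le> t0" "t0 \<le> card U"
  shows "real (card (Ev n m T U)) \<le> (real n - (sqrt (real (card U)) - sqrt (real t0))^2) ^ m"
proof -
  define t where "t = real (card T)"
  define u where "u = real (card U)"
  define a where "a = sqrt u"
  define b where "b = sqrt (real t0)"
  have b0: "b > 0" using t0 unfolding b_def by simp
  have ab: "b \<le> a" using t0 unfolding a_def b_def u_def by simp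
  have a2: "a^2 = u" unfolding a_def u_def by simp
  have b2: "b^2 = real t0" unfolding b_def by simp
  define lam where "lam = a / b"
  have lam1: "1 \<le> lam" unfolding lam_def using ab b0 by simp
  have a0: "a > 0" using ab b0 by simp
  have fT: "finite T" "finite U" using T U finite_subset by blast+
  have "card (T \<union> U) \<le> n" using T U by (metis card_atLeastAtMost card_mono finite_atLeastAtMost le_sup_iff diff_Suc_1)
  then have tun: "t + u \<le> real n" unfolding t_def u_def using TU fT by (simp add: card_Un_disjoint)
  have t0': "t \<le> real t0" unfolding t_def using t0 by simp
  have t00: "0 \<le> t" unfolding t_def by simp
  have base0: "0 \<le> real n - t - u + t * lam + u / lam"
    using tun lam1 t00 by (simp add: u_def)
  have "real n - t - u + t * lam + u / lam \<le> real n - real t0 - u + real t0 * lam + u / lam"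
  proof -
    have "t * (lam - 1) \<le> real t0 * (lam - 1)" using t0' lam1 by (intro mult_right_mono) auto
    then show ?thesis by (simp add: algebra_simps)
  qed
  also have "\<dots> = real n - (a - b)^2"
  proof -
    have "real t0 * lam = a * b" unfolding lam_def using b0 b2 by (simp add: power2_eq_square field_simps)
    moreover have "u / lam = a * b" unfolding lam_def using b0 a0 a2 by (simp add: power2_eq_square field_simps)
    ultimately show ?thesis using a2 b2 by (simp add: power2_eq_square algebra_simps)
  qed
  finally have le: "real n - t - u + t * lam + u / lam \<le> real n - (a - b)^2" .
  have "real (card (Ev n m T U)) \<le> (real n - t - u + t * lam + u / lam) ^ m"
    unfolding t_def u_def by (rule chernoff[OF TU T U lam1])
  also have "\<dots> \<le> (real n - (a - b)^2) ^ m" by (rule power_mono[OF le base0])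
  finally show ?thesis unfolding a_def b_def u_def .
qed

definition Wset :: "nat \<Rightarrow> nat \<Rightarrow> nat \<Rightarrow> (nat \<Rightarrow> nat) set" where
  "Wset n m l = {f \<in> {0..<m} \<rightarrow>\<^sub>E {1..n}. wins_two_round n m f (Apart n l) (Bpart n l) 1}"

context elec begin

lemma fail_upper:
  "real (card (({0..<m} \<rightarrow>\<^sub>E {1..n}) - Wset n m l)) \<le>
     real n * (real n - (sqrt (real (l+1)) - sqrt 2)^2) ^ m + (real n - (sqrt (real (n-l)) - sqrt (real l))^2) ^ m"
proof -
  define P where "P = {0..<m} \<rightarrow>\<^sub>E {1..n}"
  define U1 where "U1 = insert 1 {n-l+1..n}"
  define UB where "UB = {1..l+1}"
  define TF where "TF = {2..l+1}"
  define UF where "UF = insert 1 {l+2..n}"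
  define Q1 where "Q1 = real n - (sqrt (real (l+1)) - sqrt 2)^2"
  define Q2 where "Q2 = real n - (sqrt (real (n-l)) - sqrt (real l))^2"
  have "\<forall>c\<in>A-{1}. \<exists>d. d \<in> A \<and> 1 \<le> d \<and> d < c \<and> c \<le> d + 2" using compet_A by blast
  then obtain dA where dA: "\<forall>c\<in>A-{1}. dA c \<in> A \<and> 1 \<le> dA c \<and> dA c < c \<and> c \<le> dA c + 2"
    by (rule bchoice[elim_format]) blast
  have "\<forall>c\<in>B-{l+1}. \<exists>d. d \<in> B \<and> l + 1 \<le> d \<and> d < c \<and> c \<le> d + 2" using compet_B by blast
  then obtain dB where dB: "\<forall>c\<in>B-{l+1}. dB c \<in> B \<and> l + 1 \<le> dB c \<and> dB c < c \<and> c \<le> dB c + 2"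
    by (rule bchoice[elim_format]) blast
  define X1 where "X1 = (\<Union>c\<in>A-{1}. Ev n m {dA c + 1..c} U1)"
  define X2 where "X2 = (\<Union>c\<in>B-{l+1}. Ev n m {dB c + 1..c} UB)"
  define X3 where "X3 = Ev n m TF UF"
  have U1s: "U1 \<subseteq> {1..n}" unfolding U1_def using ln by auto
  have cU1: "card U1 = l + 1" unfolding U1_def using ln by simp
  have UBs: "UB \<subseteq> {1..n}" unfolding UB_def using ln by auto
  have cUB: "card UB = l + 1" unfolding UB_def by simp
  have main: "P - Wset n m l \<subseteq> X1 \<union> X2 \<union> X3"
  proof
    fix f assume fPW: "f \<in> P - Wset n m l"
    then have fP: "f \<in> P" by blast
    show "f \<in> X1 \<union> X2 \<union> X3"
    proof (rule ccontr)
      assume nX: "f \<notin> X1 \<union> X2 \<union> X3"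
      have x1: "Xi n m f A 1 \<ge> cnt m f U1"
        by (rule Xi_ge) (use voteA_1 U1s in \<open>auto simp: U1_def\<close>)
      have wA: "winner n m f A = Some 1"
      proof (rule winner_intro[OF one_A], intro ballI impI)
        fix c assume c: "c \<in> A" "c \<noteq> 1"
        then have d: "dA c \<in> A" "1 \<le> dA c" "dA c < c" "c \<le> dA c + 2" using dA by auto
        have "f \<notin> Ev n m {dA c + 1..c} U1" using nX c unfolding X1_def by blast
        then have lt: "cnt m f {dA c + 1..c} < cnt m f U1" using fP unfolding Ev_def P_def by auto
        have "Xi n m f A c \<le> cnt m f {dA c + 1..c}"
          by (rule Xi_le) (use fP seeds_in[OF A_sub c(1) d(1) d(3)] in \<open>auto simp: P_def\<close>)
        then show "Xi n m f A c < Xi n m f A 1" using lt x1 by linarith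
      qed
      have x2: "Xi n m f B (l+1) \<ge> cnt m f UB"
        by (rule Xi_ge) (use voteB_l1 in \<open>auto simp: UB_def\<close>)
      have wB: "winner n m f B = Some (l+1)"
      proof (rule winner_intro[OF l1_B], intro ballI impI)
        fix c assume c: "c \<in> B" "c \<noteq> l + 1"
        then have d: "dB c \<in> B" "l + 1 \<le> dB c" "dB c < c" "c \<le> dB c + 2" using dB by auto
        have "f \<notin> Ev n m {dB c + 1..c} UB" using nX c unfolding X2_def by blast
        then have lt: "cnt m f {dB c + 1..c} < cnt m f UB" using fP unfolding Ev_def P_def by auto
        have "Xi n m f B c \<le> cnt m f {dB c + 1..c}"
          by (rule Xi_le) (use fP seeds_in[OF B_sub c(1) d(1) d(3)] in \<open>auto simp: P_def\<close>)
        then show "Xi n m f B c < Xi n m f B (l+1)" using lt x2 by linarith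
      qed
      have b1: "1 < l + 1" "l + 1 \<le> n" using l2 ln by auto
      have S2: "{1, l+1} \<subseteq> {1..n}" using b1 by auto
      have x3: "Xi n m f {1, l+1} 1 \<ge> cnt m f UF"
      proof (rule Xi_ge, rule ballI)
        fix s assume "s \<in> UF"
        then have "s \<in> {1..n}" "s = 1 \<or> l + 1 < s" unfolding UF_def using ln by auto
        then show "vote n s {1, l+1} = 1" using final_1[OF b1] by blast
      qed
      have x4: "Xi n m f {1, l+1} (l+1) \<le> cnt m f TF"
      proof (rule Xi_le)
        show "f \<in> {0..<m} \<rightarrow>\<^sub>E {1..n}" using fP unfolding P_def .
        show "\<forall>s\<in>{1..n}. vote n s {1, l + 1} = l + 1 \<longrightarrow> s \<in> TF"
          using seeds_in[OF S2, of "l+1" 1] b1 unfolding TF_def by auto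
      qed
      have "f \<notin> X3" using nX by blast
      then have "cnt m f TF < cnt m f UF" using fP unfolding X3_def Ev_def P_def by auto
      then have "Xi n m f {1, l+1} 1 > Xi n m f {1, l+1} (l+1)" using x3 x4 by linarith
      then have "wins_two_round n m f A B 1" unfolding wins_two_round_def using wA wB by blast
      then show False using fPW unfolding Wset_def P_def by blast
    qed
  qed
  have finP: "finite P" unfolding P_def by (simp add: finite_PiE)
  have "X1 \<subseteq> P" "X2 \<subseteq> P" "X3 \<subseteq> P" unfolding X1_def X2_def X3_def Ev_def P_def by auto
  then have fin: "finite X1" "finite X2" "finite X3" using finP finite_subset by blast+
  have "card (P - Wset n m l) \<le> card (X1 \<union> X2 \<union> X3)"
    using main fin by (intro card_mono) auto
  also have "\<dots> \<le> card X1 + card X2 + card X3"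
    by (meson add_le_mono card_Un_le le_refl order_trans)
  finally have c1: "real (card (P - Wset n m l)) \<le> real (card X1) + real (card X2) + real (card X3)" by linarith
  have finA: "finite A" "finite B" using A_sub B_sub finite_subset by blast+
  have "card X1 \<le> (\<Sum>c\<in>A-{1}. card (Ev n m {dA c + 1..c} U1))"
    unfolding X1_def by (rule card_UN_le) (use finA in simp)
  then have "real (card X1) \<le> real (\<Sum>c\<in>A-{1}. card (Ev n m {dA c + 1..c} U1))" by (rule of_nat_mono)
  also have "\<dots> = (\<Sum>c\<in>A-{1}. real (card (Ev n m {dA c + 1..c} U1)))" by (rule of_nat_sum)
  also have "\<dots> \<le> (\<Sum>c\<in>A-{1}. Q1 ^ m)"
  proof (rule sum_mono)
    fix c assume c: "c \<in> A - {1}"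
    then have d: "dA c \<in> A" "1 \<le> dA c" "dA c < c" "c \<le> dA c + 2" using dA by auto
    have cn: "c \<le> n - l" using A_range c by blast
    show "real (card (Ev n m {dA c + 1..c} U1)) \<le> Q1 ^ m"
    proof -
      have TU: "{dA c + 1..c} \<inter> U1 = {}" using d cn ln unfolding U1_def by auto
      have T: "{dA c + 1..c} \<subseteq> {1..n}" using d cn ln by auto
      have ct: "card {dA c + 1..c} \<le> 2" using d by simp
      have "2 \<le> card U1" using cU1 l2 by simp
      from chern_gen[OF TU T U1s ct _ this, of m] show ?thesis unfolding Q1_def cU1 by simp
    qed
  qed
  also have "\<dots> = real (card A - 1) * Q1 ^ m" using one_A finA by (simp add: card_Diff_singleton)
  finally have s1: "real (card X1) \<le> real (card A - 1) * Q1 ^ m" .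
  have "card X2 \<le> (\<Sum>c\<in>B-{l+1}. card (Ev n m {dB c + 1..c} UB))"
    unfolding X2_def by (rule card_UN_le) (use finA in simp)
  then have "real (card X2) \<le> real (\<Sum>c\<in>B-{l+1}. card (Ev n m {dB c + 1..c} UB))" by (rule of_nat_mono)
  also have "\<dots> = (\<Sum>c\<in>B-{l+1}. real (card (Ev n m {dB c + 1..c} UB)))" by (rule of_nat_sum)
  also have "\<dots> \<le> (\<Sum>c\<in>B-{l+1}. Q1 ^ m)"
  proof (rule sum_mono)
    fix c assume c: "c \<in> B - {l+1}"
    then have d: "dB c \<in> B" "l + 1 \<le> dB c" "dB c < c" "c \<le> dB c + 2" using dB by auto
    have cn: "c \<le> n" using B_ge c by blast
    show "real (card (Ev n m {dB c + 1..c} UB)) \<le> Q1 ^ m"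
    proof -
      have TU: "{dB c + 1..c} \<inter> UB = {}" using d cn ln unfolding UB_def by auto
      have T: "{dB c + 1..c} \<subseteq> {1..n}" using d cn ln by auto
      have ct: "card {dB c + 1..c} \<le> 2" using d by simp
      have "2 \<le> card UB" using cUB l2 by simp
      from chern_gen[OF TU T UBs ct _ this, of m] show ?thesis unfolding Q1_def cUB by simp
    qed
  qed
  also have "\<dots> = real (card B - 1) * Q1 ^ m" using l1_B finA by (simp add: card_Diff_singleton)
  finally have s2: "real (card X2) \<le> real (card B - 1) * Q1 ^ m" .
  have s3: "real (card X3) \<le> Q2 ^ m"
  proof -
    have TU: "TF \<inter> UF = {}" unfolding TF_def UF_def by auto
    have T: "TF \<subseteq> {1..n}" unfolding TF_def using ln by auto
    have U: "UF \<subseteq> {1..n}" unfolding UF_def using ln by auto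
    have ct: "card TF = l" unfolding TF_def by simp
    have cu: "card UF = n - l" unfolding UF_def using ln by simp
    have "1 \<le> l" "l \<le> card UF" using l2 ln cu by auto
    from chern_gen[OF TU T U _ this, of m] show ?thesis unfolding X3_def Q2_def cu ct by simp
  qed
  have cAB: "card A + card B = n"
  proof -
    have "A \<union> B = {1..n}" "A \<inter> B = {}" using A_sub unfolding Bpart_def by auto
    then show ?thesis using finA by (metis card_Un_disjoint card_atLeastAtMost diff_Suc_1)
  qed
  have Q1pos: "0 \<le> Q1 ^ m"
  proof -
    have "(sqrt (real (l+1)) - sqrt 2)^2 \<le> real (l+1)"
    proof -
      have "0 \<le> sqrt 2" "sqrt 2 \<le> sqrt (real (l+1))" using l2 by auto
      then have h1: "0 \<le> sqrt (real (l+1)) - sqrt 2" and h2: "sqrt (real (l+1)) - sqrt 2 \<le> sqrt (real (l+1))" by auto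
      have "(sqrt (real (l+1)) - sqrt 2)^2 \<le> (sqrt (real (l+1)))^2" by (rule power_mono[OF h2 h1])
      then show ?thesis by simp
    qed
    then have "0 \<le> Q1" unfolding Q1_def using ln by simp
    then show ?thesis by simp
  qed
  have "real (card A - 1) * Q1 ^ m + real (card B - 1) * Q1 ^ m \<le> real n * Q1 ^ m"
  proof -
    have "real (card A - 1) + real (card B - 1) \<le> real n" using cAB by linarith
    then have "(real (card A - 1) + real (card B - 1)) * Q1 ^ m \<le> real n * Q1 ^ m"
      using Q1pos by (rule mult_right_mono)
    then show ?thesis by (simp add: algebra_simps)
  qed
  then show ?thesis using c1 s1 s2 s3 unfolding P_def Q1_def Q2_def by linarith
qed

end


lemma one_minus_p1:
  assumes n: "1 \<le> n"
  shows "1 - p1 n m l = real (card (({0..<m} \<rightarrow>\<^sub>E {1..n}) - Wset n m l)) / real n ^ m"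
proof -
  define P where "P = {0..<m} \<rightarrow>\<^sub>E {1..n}"
  have finP: "finite P" unfolding P_def by (simp add: finite_PiE)
  have cP: "card P = n ^ m" unfolding P_def by (simp add: card_PiE)
  have sub: "Wset n m l \<subseteq> P" unfolding Wset_def P_def by blast
  have "card (P - Wset n m l) = card P - card (Wset n m l)" using finP sub by (simp add: card_Diff_subset finite_subset)
  moreover have "card (Wset n m l) \<le> card P" using finP sub by (rule card_mono)
  ultimately have e: "real (card (P - Wset n m l)) = real n ^ m - real (card (Wset n m l))" using cP by simp
  have p: "p1 n m l = real (card (Wset n m l)) / real n ^ m" unfolding p1_def Wset_def ..
  have "real n ^ m > 0" using n by simp
  then show ?thesis unfolding p e[unfolded P_def] by (simp add: field_simps)
qed

context elec begin

lemma fail_lower1: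
  "real (n - l - 1) ^ m \<le> real (card (({0..<m} \<rightarrow>\<^sub>E {1..n}) - Wset n m l))"
proof -
  define P where "P = {0..<m} \<rightarrow>\<^sub>E {1..n}"
  define Y where "Y = {f \<in> P. \<forall>j\<in>{0..<m}. f j \<in> {2..n-l}}"
  have cY: "card Y = (n - l - 1) ^ m" unfolding Y_def P_def
    using count_all_in[of "{2..n-l}" n m] ln by simp
  have "Y \<subseteq> P - Wset n m l"
  proof
    fix f assume fY: "f \<in> Y"
    then have fP: "f \<in> P" unfolding Y_def by blast
    have x0: "Xi n m f A 1 = 0"
    proof -
      have "{j \<in> {0..<m}. vote n (f j) A = 1} = {}"
      proof (rule ccontr)
        assume "{j \<in> {0..<m}. vote n (f j) A = 1} \<noteq> {}"
        then obtain j where j: "j \<in> {0..<m}" "vote n (f j) A = 1" by blast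
        have fj: "f j \<in> {2..n-l}" using fY j unfolding Y_def by blast
        then have "f j \<in> {1..n}" by auto
        from voteA_1_conv[OF this j(2)] fj show False by auto
      qed
      then show ?thesis unfolding Xi_def by simp
    qed
    have "\<not> wins_two_round n m f A B 1"
    proof
      assume "wins_two_round n m f A B 1"
      then obtain a b where wa: "winner n m f A = Some a" and wb: "winner n m f B = Some b"
        and x: "(1 = a \<and> Xi n m f {a, b} a > Xi n m f {a, b} b) \<or> (1 = b \<and> Xi n m f {a, b} b > Xi n m f {a, b} a)"
        unfolding wins_two_round_def by blast
      have "b \<in> B" using winner_Some[OF wb] by blast
      then have "b \<noteq> 1" using one_notB by blast
      then have "a = 1" using x by blast
      then have "Xi n m f A 2 < Xi n m f A 1" using winner_Some[OF wa] two_A by auto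
      then show False using x0 by simp
    qed
    then show "f \<in> P - Wset n m l" using fP unfolding Wset_def P_def by blast
  qed
  moreover have "finite P" unfolding P_def by (simp add: finite_PiE)
  ultimately have "card Y \<le> card (P - Wset n m l)" by (intro card_mono) auto
  then show ?thesis unfolding P_def cY by (metis of_nat_le_iff of_nat_power)
qed

lemma fail_lower2:
  "real (m choose (m - m div 2)) * real l ^ (m - m div 2) * real (n - l) ^ (m div 2)
     \<le> real (card (({0..<m} \<rightarrow>\<^sub>E {1..n}) - Wset n m l))"
proof -
  define P where "P = {0..<m} \<rightarrow>\<^sub>E {1..n}"
  define TF where "TF = {2..l+1}"
  define UF where "UF = insert 1 {l+2..n}"
  define k where "k = m - m div 2"
  have TU: "TF \<inter> UF = {}" unfolding TF_def UF_def by auto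
  have TU2: "TF \<union> UF = {1..n}" unfolding TF_def UF_def using ln by auto
  have ct: "card TF = l" unfolding TF_def by simp
  have cu: "card UF = n - l" unfolding UF_def using ln by simp
  have mk: "m - k = m div 2" unfolding k_def by simp
  have bl: "(m choose k) * card TF ^ k * card UF ^ (m - k) \<le> card (Ev n m TF UF)"
    by (rule binom_lower[OF TU TU2]) (auto simp: k_def)
  have "Ev n m TF UF \<subseteq> P - Wset n m l"
  proof
    fix f assume fE: "f \<in> Ev n m TF UF"
    then have fP: "f \<in> P" and le: "cnt m f UF \<le> cnt m f TF" unfolding Ev_def P_def by auto
    have "\<not> wins_two_round n m f A B 1"
    proof
      assume "wins_two_round n m f A B 1"
      then obtain a b where wa: "winner n m f A = Some a" and wb: "winner n m f B = Some b"
        and x: "(1 = a \<and> Xi n m f {a, b} a > Xi n m f {a, b} b) \<or> (1 = b \<and> Xi n m f {a, b} b > Xi n m f {a, b} a)"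
        unfolding wins_two_round_def by blast
      have bB: "b \<in> B" using winner_Some[OF wb] by blast
      then have "b \<noteq> 1" using one_notB by blast
      then have a1: "a = 1" and gt: "Xi n m f {1, b} 1 > Xi n m f {1, b} b" using x by auto
      have b1: "1 < b" "b \<le> n" "l + 1 \<le> b" using B_ge[OF bB] l2 by auto
      have xb: "cnt m f TF \<le> Xi n m f {1, b} b"
      proof (rule Xi_ge, rule ballI)
        fix s assume "s \<in> TF"
        then have "s \<in> {2..b}" unfolding TF_def using b1 by auto
        then show "vote n s {1, b} = b" using final_b[OF b1(1,2)] by blast
      qed
      have x1: "Xi n m f {1, b} 1 \<le> cnt m f UF"
      proof (rule Xi_le)
        show "f \<in> {0..<m} \<rightarrow>\<^sub>E {1..n}" using fP unfolding P_def .
        show "\<forall>s\<in>{1..n}. vote n s {1, b} = 1 \<longrightarrow> s \<in> UF"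
        proof (intro ballI impI)
          fix s assume s: "s \<in> {1..n}" and v: "vote n s {1, b} = 1"
          show "s \<in> UF"
          proof (rule ccontr)
            assume "s \<notin> UF"
            then have "s \<in> {2..b}" using s b1 unfolding UF_def by auto
            then have "vote n s {1, b} = b" using final_b[OF b1(1,2)] by blast
            then show False using v b1 by simp
          qed
        qed
      qed
      show False using gt xb x1 le by linarith
    qed
    then show "f \<in> P - Wset n m l" using fP unfolding Wset_def P_def by blast
  qed
  moreover have "finite P" unfolding P_def by (simp add: finite_PiE)
  ultimately have "card (Ev n m TF UF) \<le> card (P - Wset n m l)" by (intro card_mono) auto
  with bl have "(m choose k) * l ^ k * (n - l) ^ (m div 2) \<le> card (P - Wset n m l)"
    unfolding ct cu mk by linarith
  then show ?thesis unfolding P_def k_def by (metis of_nat_le_iff of_nat_power of_nat_mult)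
qed

end


lemma binom_bound:
  fixes x :: real
  assumes x0: "0 \<le> x" and x1: "x \<le> 1"
  shows "x * (4 * x * (1 - x)) ^ (m div 2) / (real m + 1)
         \<le> real (m choose (m - m div 2)) * x ^ (m - m div 2) * (1 - x) ^ (m div 2)"
proof -
  define h where "h = m div 2"
  have sym: "m choose (m - h) = m choose h" unfolding h_def by (rule binomial_symmetric[symmetric]) simp
  have "(2::nat) ^ m = (\<Sum>k\<le>m. m choose k)" by (simp add: choose_row_sum)
  also have "\<dots> \<le> (\<Sum>k\<le>m. m choose h)" unfolding h_def by (rule sum_mono) (rule binomial_maximum)
  also have "\<dots> = (m + 1) * (m choose h)" by simp
  finally have c1: "real (2 ^ m) \<le> real ((m + 1) * (m choose h))" by (rule of_nat_mono)
  have "(4::real) ^ h = 2 ^ (2 * h)" by (simp add: power_mult)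
  also have "\<dots> \<le> 2 ^ m" by (rule power_increasing) (auto simp: h_def)
  also have "\<dots> \<le> (real m + 1) * real (m choose h)" using c1 by (simp add: algebra_simps)
  finally have c2: "4 ^ h / (real m + 1) \<le> real (m choose h)" by (simp add: field_simps)
  have xp: "x ^ (h + 1) \<le> x ^ (m - h)" by (rule power_decreasing) (use x0 x1 in \<open>auto simp: h_def\<close>)
  have nn: "0 \<le> x * (x * (1 - x)) ^ h" using x0 x1 by simp
  have "x * (4 * x * (1 - x)) ^ h / (real m + 1) = (4 ^ h / (real m + 1)) * (x * (x * (1 - x)) ^ h)"
  proof -
    have "(4 * x * (1 - x)) ^ h = (4 * (x * (1 - x))) ^ h" by (simp only: mult.assoc)
    also have "\<dots> = 4 ^ h * (x * (1 - x)) ^ h" by (rule power_mult_distrib)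
    finally have e: "(4 * x * (1 - x)) ^ h = 4 ^ h * (x * (1 - x)) ^ h" .
    have g: "a * (b * d) / c = (b / c) * (a * d)" for a b c d :: real by simp
    show ?thesis unfolding e by (rule g)
  qed
  also have "\<dots> \<le> real (m choose h) * (x * (x * (1 - x)) ^ h)" by (rule mult_right_mono[OF c2 nn])
  also have "x * (x * (1 - x)) ^ h = x ^ (h + 1) * (1 - x) ^ h" by (simp add: power_mult_distrib)
  also have "real (m choose h) * (x ^ (h + 1) * (1 - x) ^ h) \<le> real (m choose h) * (x ^ (m - h) * (1 - x) ^ h)"
    using xp x1 by (intro mult_left_mono mult_right_mono) auto
  finally show ?thesis unfolding h_def[symmetric] sym by (simp add: mult.assoc)
qed

lemma ln_over: "((\<lambda>x::real. ln (x + 1) / x) \<longlongrightarrow> 0) at_top"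
proof -
  have t2: "((\<lambda>x::real. 2 * (ln x / x)) \<longlongrightarrow> 2 * 0) at_top"
    by (intro tendsto_mult tendsto_const ln_x_over_x_tendsto_0)
  have ev: "eventually (\<lambda>x::real. 0 \<le> ln (x + 1) / x \<and> ln (x + 1) / x \<le> 2 * (ln x / x)) at_top"
    using eventually_ge_at_top[of "2::real"]
  proof eventually_elim
    case (elim x)
    have "2 * x \<le> x * x" using mult_right_mono[of 2 x x] elim by linarith
    then have "x + 1 \<le> x * x" using elim by linarith
    then have "ln (x + 1) \<le> ln (x * x)" using elim by simp
    also have "\<dots> = 2 * ln x" using elim by (simp add: ln_mult)
    finally have "ln (x + 1) / x \<le> 2 * ln x / x" using elim by (simp add: divide_right_mono)
    moreover have "0 \<le> ln (x + 1) / x" using elim by simp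
    ultimately show ?case by simp
  qed
  show ?thesis
    by (rule tendsto_sandwich[OF _ _ tendsto_const t2[simplified]]) (use ev in \<open>auto elim: eventually_mono\<close>)
qed

lemma div5_lim: "((\<lambda>k::nat. real ((2*k) div 5) / real (2*k)) \<longlonglongrightarrow> 1/5)"
proof -
  have lo: "1/5 - 1 / real (2*k) \<le> real ((2*k) div 5) / real (2*k)" if "k \<ge> 1" for k
  proof -
    have "real (2*k) \<le> 5 * real ((2*k) div 5) + 5"
    proof -
      have "2*k \<le> 5 * ((2*k) div 5) + 5" by linarith
      then show ?thesis by linarith
    qed
    moreover have yp: "real (2*k) > 0" using that by simp
    ultimately have "(1/5 - 1 / real (2*k)) * real (2*k) \<le> real ((2*k) div 5)"
      by (simp add: algebra_simps)
    then show ?thesis using yp by (simp add: pos_le_divide_eq)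
  qed
  have hi: "real ((2*k) div 5) / real (2*k) \<le> 1/5" if "k \<ge> 1" for k
  proof -
    have "5 * ((2*k) div 5) \<le> 2*k" by linarith
    then have "5 * real ((2*k) div 5) \<le> real (2*k)" by linarith
    then show ?thesis using that by (simp add: field_simps)
  qed
  have t1: "((\<lambda>k::nat. 1/5 - 1 / real k) \<longlonglongrightarrow> 1/5 - 0)"
    by (intro tendsto_diff tendsto_const lim_const_over_n)
  have lo2: "1/5 - 1 / real k \<le> real ((2*k) div 5) / real (2*k)" if "k \<ge> 1" for k
  proof -
    have "1 / real (2*k) \<le> 1 / real k" using that by (simp add: field_simps)
    then show ?thesis using lo[OF that] by linarith
  qed
  show ?thesis
    by (rule tendsto_sandwich[OF _ _ t1[simplified] tendsto_const])
       (use lo2 hi in \<open>auto simp: eventually_at_top_linorder intro: exI[of _ 1]\<close>)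
qed


definition qa :: "nat \<Rightarrow> nat \<Rightarrow> real" where
  "qa n l = 1 - (sqrt (real (l+1) / real n) - sqrt (2 / real n))^2"
definition qb :: "nat \<Rightarrow> nat \<Rightarrow> real" where
  "qb n l = 1 - (sqrt (real (n-l) / real n) - sqrt (real l / real n))^2"

lemma sq_div:
  assumes n: "0 < n" and a: "0 \<le> a" and b: "0 \<le> b"
  shows "(real n - (sqrt a - sqrt b)^2) / real n = 1 - (sqrt (a / real n) - sqrt (b / real n))^2"
proof -
  have sn: "sqrt (real n) > 0" using n by simp
  have "sqrt (a / real n) - sqrt (b / real n) = (sqrt a - sqrt b) / sqrt (real n)"
    by (simp add: real_sqrt_divide diff_divide_distrib)
  then have "(sqrt (a / real n) - sqrt (b / real n))^2 = (sqrt a - sqrt b)^2 / real n"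
    by (simp add: power_divide)
  then show ?thesis using n by (simp add: diff_divide_distrib)
qed

lemma sq_le1:
  fixes u v :: real
  assumes "0 \<le> v" "v \<le> u" "u \<le> 1"
  shows "0 \<le> 1 - (u - v)^2"
proof -
  have "0 \<le> u - v" "u - v \<le> 1" using assms by auto
  then have "(u - v)^2 \<le> 1^2" by (intro power_mono) auto
  then show ?thesis by simp
qed

lemma upper_q:
  assumes e: "elec n l"
  shows "1 - p1 n m l \<le> (real n + 1) * (max (qa n l) (qb n l)) ^ m"
proof -
  interpret elec n l by (rule e)
  have n0: "0 < n" using ln by simp
  have n1: "1 \<le> n" using ln by simp
  define Q1 where "Q1 = real n - (sqrt (real (l+1)) - sqrt 2)^2"
  define Q2 where "Q2 = real n - (sqrt (real (n-l)) - sqrt (real l))^2"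
  have e1: "Q1 / real n = qa n l" unfolding Q1_def qa_def using sq_div[OF n0, of "real (l+1)" 2] by simp
  have e2: "Q2 / real n = qb n l" unfolding Q2_def qb_def using sq_div[OF n0, of "real (n-l)" "real l"] by simp
  have qa0: "0 \<le> qa n l" unfolding qa_def
    by (rule sq_le1) (use l2 ln in \<open>auto simp: divide_right_mono\<close>)
  have qb0: "0 \<le> qb n l" unfolding qb_def
    by (rule sq_le1) (use l2 ln in \<open>auto simp: divide_right_mono\<close>)
  define q where "q = max (qa n l) (qb n l)"
  have "1 - p1 n m l = real (card (({0..<m} \<rightarrow>\<^sub>E {1..n}) - Wset n m l)) / real n ^ m"
    by (rule one_minus_p1[OF n1])
  also have "\<dots> \<le> (real n * Q1 ^ m + Q2 ^ m) / real n ^ m"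
    unfolding Q1_def Q2_def by (rule divide_right_mono[OF fail_upper]) simp
  also have "\<dots> = real n * (Q1 / real n) ^ m + (Q2 / real n) ^ m"
    by (simp add: power_divide add_divide_distrib)
  also have "\<dots> = real n * qa n l ^ m + qb n l ^ m" unfolding e1 e2 ..
  also have "\<dots> \<le> real n * q ^ m + q ^ m"
  proof -
    have "qa n l ^ m \<le> q ^ m" unfolding q_def by (rule power_mono) (use qa0 in auto)
    moreover have "qb n l ^ m \<le> q ^ m" unfolding q_def by (rule power_mono) (use qb0 in auto)
    ultimately show ?thesis by (simp add: add_mono mult_left_mono)
  qed
  also have "\<dots> = (real n + 1) * q ^ m" by (simp add: algebra_simps)
  finally show ?thesis unfolding q_def .
qed

lemma lower_1:
  assumes e: "elec n l"
  shows "(1 - real l / real n - 1 / real n) ^ m \<le> 1 - p1 n m l"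
proof -
  interpret elec n l by (rule e)
  have n0: "0 < n" using ln by simp
  have n1: "1 \<le> n" using ln by simp
  have "(1 - real l / real n - 1 / real n) = real (n - l - 1) / real n"
    using ln n0 by (simp add: field_simps of_nat_diff)
  then have "(1 - real l / real n - 1 / real n) ^ m = real (n - l - 1) ^ m / real n ^ m"
    by (simp add: power_divide)
  also have "\<dots> \<le> real (card (({0..<m} \<rightarrow>\<^sub>E {1..n}) - Wset n m l)) / real n ^ m"
    by (rule divide_right_mono[OF fail_lower1]) simp
  also have "\<dots> = 1 - p1 n m l" by (rule one_minus_p1[OF n1, symmetric])
  finally show ?thesis .
qed

lemma lower_2:
  assumes e: "elec n l"
  shows "(real l / real n) * (4 * (real l / real n) * (1 - real l / real n)) ^ (m div 2) / (real m + 1)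
     \<le> 1 - p1 n m l"
proof -
  interpret elec n l by (rule e)
  have n0: "0 < n" using ln by simp
  have n1: "1 \<le> n" using ln by simp
  define x where "x = real l / real n"
  define h where "h = m div 2"
  define k where "k = m - h"
  have x0: "0 \<le> x" "x \<le> 1" unfolding x_def using ln by auto
  have mk: "m = k + h" unfolding k_def h_def by simp
  have x1: "1 - x = real (n - l) / real n" unfolding x_def using ln n0 by (simp add: field_simps of_nat_diff)
  have "x * (4 * x * (1 - x)) ^ h / (real m + 1) \<le> real (m choose k) * x ^ k * (1 - x) ^ h"
    unfolding k_def h_def by (rule binom_bound[OF x0])
  also have "\<dots> = real (m choose k) * real l ^ k * real (n - l) ^ h / real n ^ m"
    unfolding x1 unfolding x_def mk by (simp add: power_divide power_add)
  also have "\<dots> \<le> real (card (({0..<m} \<rightarrow>\<^sub>E {1..n}) - Wset n m l)) / real n ^ m"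
    by (rule divide_right_mono) (use fail_lower2[of m] in \<open>simp_all add: k_def h_def\<close>)
  also have "\<dots> = 1 - p1 n m l" by (rule one_minus_p1[OF n1, symmetric])
  finally show ?thesis unfolding x_def h_def .
qed


lemma m_top:
  fixes mm :: "nat \<Rightarrow> nat"
  assumes R: "filterlim (\<lambda>k. real (mm k) / ln (real (2*k))) at_top sequentially"
  shows "filterlim (\<lambda>k. real (mm k)) at_top sequentially"
proof (rule filterlim_at_top_mono[OF R])
  show "\<forall>\<^sub>F k in sequentially. real (mm k) / ln (real (2*k)) \<le> real (mm k)"
    using eventually_ge_at_top[of "2::nat"]
  proof eventually_elim
    case (elim k)
    have "exp 1 \<le> real (2*k)"
    proof -
      have "exp (1::real) \<le> 3" using exp_le by simp
      also have "\<dots> \<le> real (2*k)" using elim by simp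
      finally show ?thesis .
    qed
    then have "1 \<le> ln (real (2*k))" using elim by (simp add: ln_ge_iff)
    then show ?case by (simp add: divide_le_eq_1 field_simps mult_le_cancel_left1)
  qed
qed

lemma key_growth:
  fixes mm :: "nat \<Rightarrow> nat"
  assumes R: "filterlim (\<lambda>k. real (mm k) / ln (real (2*k))) at_top sequentially"
    and c: "0 < c"
  shows "eventually (\<lambda>k. C + ln (real (2*k) + 1) + ln (real (mm k) + 1) < c * real (mm k)) sequentially"
proof -
  have mt: "filterlim (\<lambda>k. real (mm k)) at_top sequentially" by (rule m_top[OF R])
  have l1: "((\<lambda>k. ln (real (mm k) + 1) / real (mm k)) \<longlongrightarrow> 0) sequentially"
    using filterlim_compose[OF ln_over mt] by simp
  have e1: "eventually (\<lambda>k. ln (real (mm k) + 1) / real (mm k) < c / 4) sequentially"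
  proof -
    have "(0::real) < c / 4" using c by simp
    from order_tendstoD(2)[OF l1 this] show ?thesis .
  qed
  have e2: "eventually (\<lambda>k. real (mm k) / ln (real (2*k)) \<ge> 8 / c) sequentially"
    using R unfolding filterlim_at_top by (rule spec)
  have e3: "eventually (\<lambda>k. real (mm k) \<ge> max 1 (4 * C / c)) sequentially"
    using mt unfolding filterlim_at_top by (rule spec)
  show ?thesis
    using e1 e2 e3 eventually_ge_at_top[of "1::nat"]
  proof eventually_elim
    case (elim k)
    define m where "m = real (mm k)"
    have m1: "1 \<le> m" "4 * C / c \<le> m" using elim(3) unfolding m_def by auto
    have lnpos: "0 < ln (real (2*k))" using elim(4) by simp
    have "8 / c \<le> m / ln (real (2*k))" using elim(2) unfolding m_def by simp
    then have a1: "8 / c * ln (real (2*k)) \<le> m" using lnpos by (simp add: pos_le_divide_eq)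
    have k2: "2 \<le> real (2*k)" using elim(4) by simp
    have "2 * real (2*k) \<le> real (2*k) * real (2*k)" using mult_right_mono[OF k2, of "real (2*k)"] by simp
    then have "real (2*k) + 1 \<le> real (2*k) * real (2*k)" using k2 by linarith
    then have "ln (real (2*k) + 1) \<le> ln (real (2*k) * real (2*k))" using elim(4) by simp
    also have "\<dots> = 2 * ln (real (2*k))"
    proof -
      have "0 < real (2*k)" using elim(4) by simp
      from ln_mult_pos[OF this this] show ?thesis by linarith
    qed
    finally have a2: "ln (real (2*k) + 1) \<le> 2 * ln (real (2*k))" .
    have "2 * ln (real (2*k)) \<le> c * m / 4"
    proof -
      have "8 / c * ln (real (2*k)) * (c / 4) \<le> m * (c / 4)" using a1 c by (intro mult_right_mono) auto
      then show ?thesis using c by (simp add: field_simps)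
    qed
    with a2 have b1: "ln (real (2*k) + 1) \<le> c * m / 4" by linarith
    have "ln (m + 1) < c / 4 * m" using elim(1) m1 unfolding m_def by (simp add: divide_less_eq)
    then have b2: "ln (m + 1) < c * m / 4" by simp
    have b3: "C \<le> c * m / 4" using m1 c by (simp add: field_simps)
    have "c * m / 4 + c * m / 4 + c * m / 4 < c * m" using c m1 by simp
    then show ?case using b1 b2 b3 unfolding m_def by linarith
  qed
qed


lemma inv2k: "((\<lambda>k::nat. a / real (2*k)) \<longlonglongrightarrow> 0)"
proof -
  have g2: "filterlim (\<lambda>k::nat. 2*k) sequentially sequentially"
    by (rule filterlim_subseq) (auto simp: strict_mono_def)
  have "((\<lambda>n::nat. a / of_nat n :: real) \<longlonglongrightarrow> 0)" by (rule lim_const_over_n)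
  from filterlim_compose[OF this g2] show ?thesis by simp
qed

lemma q_lim:
  "((\<lambda>k. max (qa (2*k) ((2*k) div 5)) (qb (2*k) ((2*k) div 5))) \<longlonglongrightarrow> 4/5)"
proof -
  define x0 where "x0 k = real ((2*k) div 5) / real (2*k)" for k :: nat
  have x0l: "x0 \<longlonglongrightarrow> 1/5" unfolding x0_def by (rule div5_lim)
  have ea: "qa (2*k) ((2*k) div 5) = 1 - (sqrt (x0 k + 1 / real (2*k)) - sqrt (2 / real (2*k)))^2" for k
    unfolding qa_def x0_def by (simp add: add_divide_distrib add.commute)
  have eb: "qb (2*k) ((2*k) div 5) = 1 - (sqrt (1 - x0 k) - sqrt (x0 k))^2" if "k \<ge> 1" for k
  proof -
    have "(2*k) div 5 \<le> 2*k" by simp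
    then have "real (2*k - (2*k) div 5) / real (2*k) = 1 - x0 k"
      unfolding x0_def using that by (simp add: of_nat_diff diff_divide_distrib)
    then show ?thesis unfolding qb_def x0_def by simp
  qed
  have la: "((\<lambda>k. 1 - (sqrt (x0 k + 1 / real (2*k)) - sqrt (2 / real (2*k)))^2) \<longlonglongrightarrow>
            1 - (sqrt (1/5 + 0) - sqrt 0)^2)"
    by (intro tendsto_intros x0l inv2k)
  have lb: "((\<lambda>k. 1 - (sqrt (1 - x0 k) - sqrt (x0 k))^2) \<longlonglongrightarrow> 1 - (sqrt (1 - 1/5) - sqrt (1/5))^2)"
    by (intro tendsto_intros x0l)
  have v1: "1 - (sqrt (1/5 + 0) - sqrt 0)^2 = (4/5::real)" by simp
  have v2: "1 - (sqrt (1 - 1/5) - sqrt (1/5))^2 = (4/5::real)"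
  proof -
    have "sqrt (1 - 1/5::real) = sqrt (4 * (1/5))" by simp
    also have "\<dots> = sqrt 4 * sqrt (1/5)" by (rule real_sqrt_mult)
    also have "sqrt (4::real) = 2" by (rule real_sqrt_unique) auto
    finally have "sqrt (1 - 1/5::real) - sqrt (1/5) = sqrt (1/5)" by simp
    then show ?thesis by simp
  qed
  have la': "((\<lambda>k. qa (2*k) ((2*k) div 5)) \<longlonglongrightarrow> 4/5)" using la unfolding v1 ea .
  have lb': "((\<lambda>k. qb (2*k) ((2*k) div 5)) \<longlonglongrightarrow> 4/5)"
  proof (rule Lim_transform_eventually[OF lb[unfolded v2]])
    show "\<forall>\<^sub>F k in sequentially. 1 - (sqrt (1 - x0 k) - sqrt (x0 k))^2 = qb (2*k) ((2*k) div 5)"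
      using eventually_ge_at_top[of "1::nat"] by eventually_elim (simp add: eb)
  qed
  from tendsto_max[OF la' lb'] show ?thesis by simp
qed


theorem mainTheorem8:
  fixes M :: "nat \<Rightarrow> nat" and l :: "nat \<Rightarrow> nat"
  assumes "filterlim (\<lambda>n. real (M n) / ln (real n)) at_top sequentially"
    and "eventually (\<lambda>k. l (2 * k) \<in> L_opt (2 * k) (M (2 * k))) sequentially"
  shows "((\<lambda>k. real (l (2 * k)) / real (2 * k)) \<longlonglongrightarrow> 1 / 5) \<and>
    limsup (\<lambda>k. ereal (1 / real (M (2 * k))) * logE (1 - p1 (2 * k) (M (2 * k)) (l (2 * k))))
           \<le> ereal (ln (4 / 5))"
proof -
  define mm where "mm k = M (2*k)" for k :: nat
  define ll where "ll k = l (2*k)" for k :: nat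
  define l0 where "l0 k = (2*k) div 5" for k :: nat
  define F where "F k = 1 - p1 (2*k) (mm k) (ll k)" for k
  define q where "q k = max (qa (2*k) (l0 k)) (qb (2*k) (l0 k))" for k
  have g2: "filterlim (\<lambda>k::nat. 2*k) sequentially sequentially"
    by (rule filterlim_subseq) (auto simp: strict_mono_def)
  have R: "filterlim (\<lambda>k. real (mm k) / ln (real (2*k))) at_top sequentially"
    using filterlim_compose[OF assms(1) g2] unfolding mm_def by simp
  have qlim: "q \<longlonglongrightarrow> 4/5" unfolding q_def l0_def by (rule q_lim)
  have mt: "filterlim (\<lambda>k. real (mm k)) at_top sequentially" by (rule m_top[OF R])
  have opt: "eventually (\<lambda>k. ll k \<in> L_opt (2*k) (mm k)) sequentially"
    using assms(2) unfolding ll_def mm_def .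
  have ev_el: "eventually (\<lambda>k. elec (2*k) (ll k) \<and> ll k < k) sequentially"
    using opt
  proof eventually_elim
    case (elim k)
    then have "2 \<le> ll k" "ll k \<le> (2*k) div 2 - 1" unfolding L_opt_def by auto
    then show ?case unfolding elec_def by auto
  qed
  have ev_F: "eventually (\<lambda>k. 0 \<le> F k \<and> F k \<le> (real (2*k) + 1) * q k ^ mm k) sequentially"
    using opt eventually_ge_at_top[of "5::nat"]
  proof eventually_elim
    case (elim k)
    have l02: "2 \<le> l0 k" "l0 k \<le> (2*k) div 2 - 1" unfolding l0_def using elim(2) by auto
    then have el0: "elec (2*k) (l0 k)" unfolding elec_def by auto
    have "p1 (2*k) (mm k) (l0 k) \<le> p1 (2*k) (mm k) (ll k)"
      using elim(1) l02 unfolding L_opt_def by auto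
    then have "F k \<le> 1 - p1 (2*k) (mm k) (l0 k)" unfolding F_def by simp
    also have "\<dots> \<le> (real (2*k) + 1) * q k ^ mm k" unfolding q_def by (rule upper_q[OF el0])
    finally have up: "F k \<le> (real (2*k) + 1) * q k ^ mm k" .
    have "F k = real (card (({0..<mm k} \<rightarrow>\<^sub>E {1..2*k}) - Wset (2*k) (mm k) (ll k))) / real (2*k) ^ mm k"
      unfolding F_def by (rule one_minus_p1) (use elim in simp)
    then have "0 \<le> F k" by simp
    with up show ?case by simp
  qed
  have kg: "\<And>c C. 0 < c \<Longrightarrow> eventually (\<lambda>k. C + ln (real (2*k) + 1) + ln (real (mm k) + 1) < c * real (mm k)) sequentially"
    by (rule key_growth[OF R])
  have m1: "eventually (\<lambda>k. 1 \<le> real (mm k)) sequentially"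
    using mt unfolding filterlim_at_top by (rule spec)
  have qp: "eventually (\<lambda>k. 0 < q k) sequentially"
    using order_tendstoD(1)[OF qlim, of 0] by simp
  have A: "limsup (\<lambda>k. ereal (1 / real (M (2 * k))) * logE (1 - p1 (2 * k) (M (2 * k)) (l (2 * k))))
           \<le> ereal (ln (4 / 5))"
  proof (rule ereal_le_epsilon2)
    fix e :: real assume e: "0 < e"
    have "4/5 < (4/5) * exp (e/2)" using e by simp
    from order_tendstoD(2)[OF qlim this]
    have qe: "eventually (\<lambda>k. q k < (4/5) * exp (e/2)) sequentially" .
    have kg1: "eventually (\<lambda>k. 0 + ln (real (2*k) + 1) + ln (real (mm k) + 1) < e / 2 * real (mm k)) sequentially"
      using kg[of "e/2" 0] e by simp
    have "eventually (\<lambda>k. ereal (1 / real (M (2*k))) * logE (1 - p1 (2*k) (M (2*k)) (l (2*k)))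
             \<le> ereal (ln (4/5)) + ereal e) sequentially"
      using qe qp kg1 m1 ev_F
    proof eventually_elim
      case (elim k)
      define m where "m = real (mm k)"
      have Fk: "1 - p1 (2*k) (M (2*k)) (l (2*k)) = F k" unfolding F_def mm_def ll_def ..
      have Mk: "real (M (2*k)) = m" unfolding m_def mm_def ..
      have mpos: "0 < m" using elim(4) unfolding m_def by simp
      show ?case
      proof (cases "F k = 0")
        case True
        then have "logE (F k) = - \<infinity>" unfolding logE_def by simp
        then show ?thesis unfolding Fk Mk using mpos by simp
      next
        case False
        then have Fp: "0 < F k" using elim(5) by linarith
        have qm: "0 < q k ^ mm k" using elim(2) by simp
        have "ln (F k) \<le> ln ((real (2*k) + 1) * q k ^ mm k)"
          using Fp elim(5) qm by (subst ln_le_cancel_iff) auto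
        also have "\<dots> = ln (real (2*k) + 1) + m * ln (q k)"
          using qm by (simp add: ln_mult_pos ln_realpow m_def)
        also have "ln (q k) \<le> ln (4/5) + e/2"
        proof -
          have "ln (q k) \<le> ln ((4/5) * exp (e/2))" using elim(1,2) by (subst ln_le_cancel_iff) auto
          also have "\<dots> = ln (4/5) + ln (exp (e/2))" by (rule ln_mult_pos) auto
          also have "\<dots> = ln (4/5) + e/2" by (simp only: ln_exp)
          finally show ?thesis .
        qed
        then have "m * ln (q k) \<le> m * (ln (4/5) + e/2)" using mpos by (intro mult_left_mono) auto
        then have "ln (real (2*k) + 1) + m * ln (q k) \<le> ln (real (2*k) + 1) + m * (ln (4/5) + e/2)" by simp
        finally have l1: "ln (F k) \<le> ln (real (2*k) + 1) + m * (ln (4/5) + e/2)" .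
        have "0 \<le> ln (m + 1)" using mpos by simp
        then have l2: "ln (real (2*k) + 1) < e/2 * m" using elim(3) unfolding m_def by linarith
        have "ln (F k) < m * (ln (4/5) + e)" using l1 l2 by (simp add: algebra_simps)
        then have "ln (F k) / m < ln (4/5) + e" using mpos by (simp add: divide_less_eq mult.commute)
        moreover have "logE (F k) = ereal (ln (F k))" unfolding logE_def using False by simp
        ultimately show ?thesis unfolding Fk Mk by simp
      qed
    qed
    then show "limsup (\<lambda>k. ereal (1 / real (M (2 * k))) * logE (1 - p1 (2 * k) (M (2 * k)) (l (2 * k))))
           \<le> ereal (ln (4 / 5)) + ereal e" by (rule Limsup_bounded)
  qed
  have B: "((\<lambda>k. real (l (2 * k)) / real (2 * k)) \<longlonglongrightarrow> 1 / 5)"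
  proof (rule order_tendstoI)
    fix a :: real assume a: "a < 1/5"
    define d where "d = (1/5 - a) / 3"
    define g1 where "g1 = 4/5 + d"
    define g2' where "g2' = 4/5 + 2 * d"
    have d0: "0 < d" unfolding d_def using a by simp
    have g1p: "0 < g1" unfolding g1_def using d0 by simp
    have c0: "0 < ln (g2' / g1)" unfolding g1_def g2'_def using d0 by simp
    have qe: "eventually (\<lambda>k. q k < g1) sequentially"
      using order_tendstoD(2)[OF qlim, of g1] d0 unfolding g1_def by simp
    have ie: "eventually (\<lambda>k. 1 / real (2*k) < d) sequentially"
      using order_tendstoD(2)[OF inv2k[of 1] d0] .
    have kg2: "eventually (\<lambda>k. 0 + ln (real (2*k) + 1) + ln (real (mm k) + 1) < ln (g2' / g1) * real (mm k)) sequentially"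
      by (rule kg[OF c0])
    show "eventually (\<lambda>k. a < real (l (2*k)) / real (2*k)) sequentially"
      using qe qp ie kg2 ev_F ev_el m1
    proof eventually_elim
      case (elim k)
      define m where "m = real (mm k)"
      define x where "x = real (ll k) / real (2*k)"
      have mpos: "0 < m" using elim(7) unfolding m_def by simp
      show "a < real (l (2*k)) / real (2*k)"
      proof (rule ccontr)
        assume "\<not> a < real (l (2*k)) / real (2*k)"
        then have xa: "x \<le> a" unfolding x_def ll_def by simp
        have low: "(1 - x - 1 / real (2*k)) ^ mm k \<le> F k"
          unfolding F_def x_def using lower_1[of "2*k" "ll k" "mm k"] elim(6) by simp
        have d3: "3 * d = 1/5 - a" unfolding d_def by simp
        have g2le: "g2' \<le> 1 - x - 1 / real (2*k)" using xa elim(3) d3 unfolding g2'_def by linarith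
        have g2p: "0 < g2'" unfolding g2'_def using d0 by simp
        have "g2' ^ mm k \<le> (1 - x - 1 / real (2*k)) ^ mm k" using g2le g2p by (intro power_mono) auto
        also have "\<dots> \<le> F k" by (rule low)
        also have "\<dots> \<le> (real (2*k) + 1) * q k ^ mm k" using elim(5) by simp
        also have "\<dots> \<le> (real (2*k) + 1) * g1 ^ mm k"
          using elim(1,2) by (intro mult_left_mono power_mono) auto
        finally have ineq: "g2' ^ mm k \<le> (real (2*k) + 1) * g1 ^ mm k" .
        have "ln (g2' ^ mm k) \<le> ln ((real (2*k) + 1) * g1 ^ mm k)"
          using ineq g2p g1p by (subst ln_le_cancel_iff) auto
        then have "m * ln g2' \<le> ln (real (2*k) + 1) + m * ln g1"
          using g1p by (simp add: ln_mult_pos ln_realpow m_def)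
        then have "m * ln (g2' / g1) \<le> ln (real (2*k) + 1)"
          using g1p g2p by (simp add: ln_div algebra_simps)
        moreover have "0 \<le> ln (m + 1)" using mpos by simp
        moreover have "ln (real (2*k) + 1) + ln (m + 1) < m * ln (g2' / g1)"
          using elim(4) unfolding m_def by (simp add: mult.commute)
        ultimately show False by linarith
      qed
    qed
  next
    fix b :: real assume b: "1/5 < b"
    define b' where "b' = min b (1/4)"
    define r0 where "r0 = 4 * b' * (1 - b')"
    define g where "g = (16/25 + r0) / 2"
    have b'1: "1/5 < b'" "b' \<le> 1/4" "b' \<le> b" unfolding b'_def using b by auto
    have r0g: "16/25 < r0"
    proof -
      have "r0 - 16/25 = 4 * (b' - 1/5) * (4/5 - b')" unfolding r0_def by (simp add: algebra_simps)
      moreover have "0 < 4 * (b' - 1/5) * (4/5 - b')" using b'1 by (intro mult_pos_pos) auto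
      ultimately show ?thesis by simp
    qed
    have gg: "16/25 < g" "g < r0" unfolding g_def using r0g by auto
    have gp: "0 < g" using gg by simp
    define c where "c = ln (r0 / g)"
    have c0: "0 < c" unfolding c_def using gg gp by simp
    have q2lim: "(\<lambda>k. q k ^ 2) \<longlonglongrightarrow> (4/5)^2" by (intro tendsto_intros qlim)
    have qe2: "eventually (\<lambda>k. q k ^ 2 < g) sequentially"
    proof -
      have "(4/5::real)^2 < g" using gg by (simp add: power2_eq_square)
      from order_tendstoD(2)[OF q2lim this] show ?thesis .
    qed
    have qe1: "eventually (\<lambda>k. q k < 1) sequentially"
      using order_tendstoD(2)[OF qlim, of 1] by simp
    have c2: "0 < c / 2" using c0 by simp
    have kg3: "eventually (\<lambda>k. (c / 2 - ln b') + ln (real (2*k) + 1) + ln (real (mm k) + 1) < c / 2 * real (mm k)) sequentially"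
      by (rule kg[OF c2])
    have "eventually (\<lambda>k. real (l (2*k)) / real (2*k) < b') sequentially"
      using qe2 qe1 qp kg3 ev_F ev_el m1
    proof eventually_elim
      case (elim k)
      define m where "m = real (mm k)"
      define h where "h = mm k div 2"
      define x where "x = real (ll k) / real (2*k)"
      have mpos: "0 < m" using elim(7) unfolding m_def by simp
      show "real (l (2*k)) / real (2*k) < b'"
      proof (rule ccontr)
        assume "\<not> real (l (2*k)) / real (2*k) < b'"
        then have xb: "b' \<le> x" unfolding x_def ll_def by simp
        have k0: "0 < k" using elim(6) by auto
        have xh: "x < 1/2" unfolding x_def using elim(6) k0 by (simp add: field_simps)
        have b0: "0 < b'" using b'1 by simp
        have rx: "r0 \<le> 4 * x * (1 - x)"
        proof -
          have "4 * x * (1 - x) - r0 = 4 * (x - b') * (1 - x - b')" unfolding r0_def by (simp add: algebra_simps)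
          moreover have "0 \<le> 4 * (x - b') * (1 - x - b')" using xb xh b'1 by (intro mult_nonneg_nonneg) auto
          ultimately show ?thesis by simp
        qed
        have r0p: "0 < r0" using r0g by simp
        have low: "x * (4 * x * (1 - x)) ^ h / (real (mm k) + 1) \<le> F k"
          unfolding F_def x_def h_def using lower_2[of "2*k" "ll k" "mm k"] elim(6) by simp
        have "b' * r0 ^ h / (m + 1) \<le> x * (4 * x * (1 - x)) ^ h / (m + 1)"
          using xb rx r0p b0 mpos by (intro divide_right_mono mult_mono power_mono) auto
        also have "\<dots> \<le> F k" using low unfolding m_def .
        also have "\<dots> \<le> (real (2*k) + 1) * q k ^ mm k" using elim(5) by simp
        also have "q k ^ mm k \<le> q k ^ (2 * h)"
          using elim(2,3) unfolding h_def by (intro power_decreasing) auto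
        also have "q k ^ (2 * h) = (q k ^ 2) ^ h" by (simp add: power_mult)
        also have "(q k ^ 2) ^ h \<le> g ^ h" using elim(1) by (intro power_mono) auto
        finally have ineq: "b' * r0 ^ h / (m + 1) \<le> (real (2*k) + 1) * g ^ h"
          by (simp add: mult_left_mono)
        have ineq2: "b' * r0 ^ h \<le> (m + 1) * ((real (2*k) + 1) * g ^ h)"
          using ineq mpos by (simp add: divide_le_eq mult.commute)
        have "ln (b' * r0 ^ h) \<le> ln ((m + 1) * ((real (2*k) + 1) * g ^ h))"
          using ineq2 b0 r0p mpos gp by (subst ln_le_cancel_iff) auto
        then have "ln b' + real h * ln r0 \<le> ln (m + 1) + (ln (real (2*k) + 1) + real h * ln g)"
          using b0 r0p mpos gp by (simp add: ln_mult_pos ln_realpow)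
        then have hc: "real h * c \<le> ln (m + 1) + ln (real (2*k) + 1) - ln b'"
          unfolding c_def using r0p gp by (simp add: ln_div algebra_simps)
        have "m - 1 \<le> 2 * real h" unfolding m_def h_def by linarith
        then have "(m - 1) * (c / 2) \<le> (2 * real h) * (c / 2)" using c0 by (intro mult_right_mono) auto
        then have "(m - 1) * (c / 2) \<le> real h * c" by simp
        then have "c / 2 * m \<le> (c / 2 - ln b') + ln (real (2*k) + 1) + ln (m + 1)" using hc by (simp add: algebra_simps)
        then show False using elim(4) unfolding m_def by simp
      qed
    qed
    then show "eventually (\<lambda>k. real (l (2*k)) / real (2*k) < b) sequentially"
      by eventually_elim (use b'1 in simp)
  qed
  show ?thesis using A B by blast
qed


end
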